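(* Let $N$ be a non-negative integer, $R$ a ring, $I$ an invertible ideal of $R$, and $\pi\in R$ with $(R/I)[\pi^\infty]=(R/I)[\pi^N]$. Let $M$ be an $R$-module which is $(\pi R+I)$-adically complete and separated and such that $M/(\pi R+I)^nM$ is a flat $R/(\pi R+I)^n$-module for every $n\ge1$. Then: (1) $(M/IM)[\pi^\infty]=(M/IM)[\pi^N]$; (2) $M/I^nM$ is $\pi$-adically complete and separated for every $n\ge1$; (3) the map $I^n\otimes_RM\to M$ is injective for every $n\ge1$.
   Context: For a module $X$ and element $\pi$, $X[\pi^k]$ denotes the elements killed by $\pi^k$ and $X[\pi^\infty]=\bigcup_kX[\pi^k]$. *)

theory Defs
  imports Complex_Main
begin

text \<open>Commutative ring R = the type 'r; R-module M = the type 'm with scalar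
  multiplication scale (locale module from HOL.Modules).  Ideals are subsets of 'r.\<close>

definition is_ideal :: "'r::comm_ring_1 set \<Rightarrow> bool" where
  "is_ideal I \<longleftrightarrow> 0 \<in> I \<and> (\<forall>a\<in>I. \<forall>b\<in>I. a + b \<in> I) \<and> (\<forall>r. \<forall>a\<in>I. r * a \<in> I)"

definition ideal_gen :: "'r::comm_ring_1 set \<Rightarrow> 'r set" where
  "ideal_gen S = {(\<Sum>i<k. r i * s i) | (k::nat) r s. \<forall>i<k. s i \<in> S}"

definition ideal_prod :: "'r::comm_ring_1 set \<Rightarrow> 'r set \<Rightarrow> 'r set" where
  "ideal_prod I J = ideal_gen {a * b | a b. a \<in> I \<and> b \<in> J}"

fun ideal_pow :: "'r::comm_ring_1 set \<Rightarrow> nat \<Rightarrow> 'r set" where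
  "ideal_pow I 0 = UNIV"
| "ideal_pow I (Suc n) = ideal_prod I (ideal_pow I n)"

definition principal_ideal :: "'r::comm_ring_1 \<Rightarrow> 'r set" where
  "principal_ideal a = {a * r | r. True}"

definition ideal_sum :: "'r::comm_ring_1 set \<Rightarrow> 'r set \<Rightarrow> 'r set" where
  "ideal_sum I J = {a + b | a b. a \<in> I \<and> b \<in> J}"

definition nonzerodivisor :: "'r::comm_ring_1 \<Rightarrow> bool" where
  "nonzerodivisor d \<longleftrightarrow> (\<forall>x. d * x = 0 \<longrightarrow> x = 0)"

text \<open>I is invertible: there is a fractional ideal J (written with a common
  denominator d, i.e. J = d^-1 J' for an ideal J' and a nonzerodivisor d) with IJ = R,
  i.e. I J' = dR.\<close>
definition invertible_ideal :: "'r::comm_ring_1 set \<Rightarrow> bool" where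
  "invertible_ideal I \<longleftrightarrow> (\<exists>J d. is_ideal J \<and> nonzerodivisor d \<and> ideal_prod I J = principal_ideal d)"

definition submod :: "('r::comm_ring_1 \<Rightarrow> 'm::ab_group_add \<Rightarrow> 'm) \<Rightarrow> 'r set \<Rightarrow> 'm set" where
  "submod scale A = {(\<Sum>i<k. scale (a i) (m i)) | (k::nat) a m. \<forall>i<k. a i \<in> A}"

text \<open>Q k = J^k M + N, the preimage in M of J^k (M/N).\<close>
definition adic_nbhd :: "('r::comm_ring_1 \<Rightarrow> 'm::ab_group_add \<Rightarrow> 'm) \<Rightarrow> 'm set \<Rightarrow> 'r set \<Rightarrow> nat \<Rightarrow> 'm set" where
  "adic_nbhd scale N J k = {y + z | y z. y \<in> submod scale (ideal_pow J k) \<and> z \<in> N}"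

text \<open>M/N is J-adically complete and separated: the map M/N \<rightarrow> lim_k (M/N)/J^k(M/N)
  is injective (separated) and surjective (complete).\<close>
definition adic_complete_sep :: "('r::comm_ring_1 \<Rightarrow> 'm::ab_group_add \<Rightarrow> 'm) \<Rightarrow> 'm set \<Rightarrow> 'r set \<Rightarrow> bool" where
  "adic_complete_sep scale N J \<longleftrightarrow>
     (\<forall>x. (\<forall>k. x \<in> adic_nbhd scale N J k) \<longrightarrow> x \<in> N) \<and>
     (\<forall>f::nat \<Rightarrow> 'm. (\<forall>k. f (Suc k) - f k \<in> adic_nbhd scale N J k) \<longrightarrow>
        (\<exists>x. \<forall>k. x - f k \<in> adic_nbhd scale N J k))"

text \<open>M/AM is a flat R/A-module, via the equational criterion of flatness
  (lifted from the quotients to R and M).\<close>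
definition quot_flat :: "('r::comm_ring_1 \<Rightarrow> 'm::ab_group_add \<Rightarrow> 'm) \<Rightarrow> 'r set \<Rightarrow> bool" where
  "quot_flat scale A \<longleftrightarrow>
     (\<forall>(k::nat) (a::nat \<Rightarrow> 'r) (x::nat \<Rightarrow> 'm). (\<Sum>i<k. scale (a i) (x i)) \<in> submod scale A \<longrightarrow>
        (\<exists>(l::nat) (b::nat \<Rightarrow> nat \<Rightarrow> 'r) (y::nat \<Rightarrow> 'm).
           (\<forall>i<k. x i - (\<Sum>j<l. scale (b i j) (y j)) \<in> submod scale A) \<and>
           (\<forall>j<l. (\<Sum>i<k. a i * b i j) \<in> A)))"

text \<open>Tensor product A \<otimes>_R M (A an ideal) = free abelian group on A \<times> M modulo the
  subgroup generated by the bilinearity / balancing relations.\<close>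
definition delta :: "'a \<Rightarrow> 'a \<Rightarrow> int" where
  "delta p = (\<lambda>q. if q = p then 1 else 0)"

definition tensor_rels :: "('r::comm_ring_1 \<Rightarrow> 'm::ab_group_add \<Rightarrow> 'm) \<Rightarrow> 'r set \<Rightarrow> ('r \<times> 'm \<Rightarrow> int) set" where
  "tensor_rels scale A =
     {(\<lambda>q. delta (a + a', m) q - delta (a, m) q - delta (a', m) q) | a a' m. a \<in> A \<and> a' \<in> A}
   \<union> {(\<lambda>q. delta (a, m + m') q - delta (a, m) q - delta (a, m') q) | a m m'. a \<in> A}
   \<union> {(\<lambda>q. delta (r * a, m) q - delta (a, scale r m) q) | r a m. a \<in> A}"

inductive_set zspan :: "('a \<Rightarrow> int) set \<Rightarrow> ('a \<Rightarrow> int) set" for G where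
  zero: "(\<lambda>q. 0) \<in> zspan G"
| add: "x \<in> zspan G \<Longrightarrow> g \<in> G \<Longrightarrow> (\<lambda>q. x q + g q) \<in> zspan G"
| sub: "x \<in> zspan G \<Longrightarrow> g \<in> G \<Longrightarrow> (\<lambda>q. x q - g q) \<in> zspan G"

text \<open>The multiplication map A \<otimes>_R M \<rightarrow> M, a \<otimes> m \<mapsto> a m, is injective: every element
  \<Sum> c_i (a_i \<otimes> m_i) of the tensor product mapping to 0 is 0 in the tensor product.\<close>
definition tensor_mult_injective :: "('r::comm_ring_1 \<Rightarrow> 'm::ab_group_add \<Rightarrow> 'm) \<Rightarrow> 'r set \<Rightarrow> bool" where
  "tensor_mult_injective scale A \<longleftrightarrow>
     (\<forall>(k::nat) (c::nat \<Rightarrow> int) (a::nat \<Rightarrow> 'r) (m::nat \<Rightarrow> 'm).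
        (\<forall>i<k. a i \<in> A) \<longrightarrow> (\<Sum>i<k. scale (of_int (c i) * a i) (m i)) = 0 \<longrightarrow>
        (\<lambda>q. \<Sum>i<k. c i * delta (a i, m i) q) \<in> zspan (tensor_rels scale A))"

end

theory Submission
  imports Defs
begin

lemma sum_lessThan_add: "(\<Sum>i<m+n. f i) = (\<Sum>i<m. f i) + (\<Sum>i<n. f (m+i))"
  for f :: "nat \<Rightarrow> 'a::comm_monoid_add"
  by (induction n) (simp_all add: add.assoc)

lemma ideal_0: "is_ideal I \<Longrightarrow> 0 \<in> I"
  by (simp add: is_ideal_def)
lemma ideal_add: "is_ideal I \<Longrightarrow> a \<in> I \<Longrightarrow> b \<in> I \<Longrightarrow> a + b \<in> I"
  by (simp add: is_ideal_def)
lemma ideal_mult_left: "is_ideal I \<Longrightarrow> a \<in> I \<Longrightarrow> r * a \<in> I"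
  by (simp add: is_ideal_def)
lemma ideal_mult_right: "is_ideal I \<Longrightarrow> a \<in> I \<Longrightarrow> a * r \<in> I"
  by (metis ideal_mult_left mult.commute)
lemma ideal_neg: "is_ideal I \<Longrightarrow> a \<in> I \<Longrightarrow> - a \<in> I"
  by (metis ideal_mult_left mult_minus1)
lemma ideal_diff: "is_ideal I \<Longrightarrow> a \<in> I \<Longrightarrow> b \<in> I \<Longrightarrow> a - b \<in> I"
  by (metis ideal_add ideal_neg diff_conv_add_uminus)
lemma ideal_sum: "is_ideal I \<Longrightarrow> (\<And>x. x \<in> B \<Longrightarrow> f x \<in> I) \<Longrightarrow> sum f B \<in> I"
proof (induction B rule: infinite_finite_induct)
  case (infinite A) then show ?case by (simp add: ideal_0)
next
  case empty then show ?case by (simp add: ideal_0)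
next
  case (insert x F) then show ?case by (simp add: ideal_add)
qed

lemma ideal_UNIV[simp]: "is_ideal UNIV"
  by (simp add: is_ideal_def)

lemma ideal_genI: "x = (\<Sum>i<k. r i * s i) \<Longrightarrow> \<forall>i<(k::nat). s i \<in> S \<Longrightarrow> x \<in> ideal_gen S"
  unfolding ideal_gen_def by blast
lemma ideal_genE: "x \<in> ideal_gen S \<Longrightarrow> (\<And>k r s. x = (\<Sum>i<k. r i * s i) \<Longrightarrow> \<forall>i<(k::nat). s i \<in> S \<Longrightarrow> P) \<Longrightarrow> P"
  unfolding ideal_gen_def by blast

lemma ideal_gen_ideal: "is_ideal (ideal_gen S)"
proof -
  have 0: "0 \<in> ideal_gen S"
    by (rule ideal_genI[where k=0]) auto
  have add: "a + b \<in> ideal_gen S" if "a \<in> ideal_gen S" "b \<in> ideal_gen S" for a b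
  proof -
    from that(1) obtain k1 :: nat and r1 s1 where a: "a = (\<Sum>i<k1. r1 i * s1 i)" "\<forall>i<k1. s1 i \<in> S"
      by (rule ideal_genE)
    from that(2) obtain k2 :: nat and r2 s2 where b: "b = (\<Sum>i<k2. r2 i * s2 i)" "\<forall>i<k2. s2 i \<in> S"
      by (rule ideal_genE)
    define r where "r i = (if i < k1 then r1 i else r2 (i - k1))" for i
    define s where "s i = (if i < k1 then s1 i else s2 (i - k1))" for i
    have "a + b = (\<Sum>i<k1+k2. r i * s i)"
      unfolding sum_lessThan_add a b r_def s_def by simp
    moreover have "\<forall>i<k1+k2. s i \<in> S"
      using a b by (auto simp: s_def)
    ultimately show ?thesis by (rule ideal_genI)
  qed
  have mult: "c * a \<in> ideal_gen S" if "a \<in> ideal_gen S" for a c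
  proof -
    from that obtain k :: nat and r s where a: "a = (\<Sum>i<k. r i * s i)" "\<forall>i<k. s i \<in> S"
      by (rule ideal_genE)
    have "c * a = (\<Sum>i<k. (c * r i) * s i)"
      unfolding a by (simp add: sum_distrib_left mult.assoc)
    then show ?thesis using a(2) by (rule ideal_genI)
  qed
  show ?thesis using 0 add mult unfolding is_ideal_def by blast
qed

lemma ideal_gen_sub: "S \<subseteq> ideal_gen S"
proof
  fix x assume "x \<in> S"
  then show "x \<in> ideal_gen S"
    by (intro ideal_genI[where k=1 and r="\<lambda>_. 1" and s="\<lambda>_. x"]) auto
qed

lemma ideal_gen_least: assumes "is_ideal C" "S \<subseteq> C" shows "ideal_gen S \<subseteq> C"
proof
  fix x assume "x \<in> ideal_gen S"
  then obtain k :: nat and r s where x: "x = (\<Sum>i<k. r i * s i)" "\<forall>i<k. s i \<in> S"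
    by (rule ideal_genE)
  have "r i * s i \<in> C" if "i \<in> {..<k}" for i
    using that x(2) assms by (intro ideal_mult_left) auto
  then show "x \<in> C" unfolding x(1) by (intro ideal_sum[OF assms(1)])
qed

lemma ideal_prod_ideal: "is_ideal (ideal_prod A B)"
  unfolding ideal_prod_def by (rule ideal_gen_ideal)

lemma ideal_prod_mem: "a \<in> A \<Longrightarrow> b \<in> B \<Longrightarrow> a * b \<in> ideal_prod A B"
  unfolding ideal_prod_def by (rule subsetD[OF ideal_gen_sub]) blast

lemma ideal_prod_least:
  assumes "is_ideal C" "\<And>a b. a \<in> A \<Longrightarrow> b \<in> B \<Longrightarrow> a * b \<in> C"
  shows "ideal_prod A B \<subseteq> C"
  unfolding ideal_prod_def
proof (rule ideal_gen_least[OF assms(1)])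
  show "{a * b |a b. a \<in> A \<and> b \<in> B} \<subseteq> C" using assms(2) by blast
qed

lemma ideal_prod_comm: "ideal_prod A B = ideal_prod B A"
  by (intro equalityI ideal_prod_least ideal_prod_ideal)
     (metis mult.commute ideal_prod_mem)+

lemma ideal_prod_sub_left: "is_ideal A \<Longrightarrow> ideal_prod A B \<subseteq> A"
  by (rule ideal_prod_least) (auto intro: ideal_mult_right)

lemma ideal_prod_sub_right: "is_ideal B \<Longrightarrow> ideal_prod A B \<subseteq> B"
  by (rule ideal_prod_least) (auto intro: ideal_mult_left)

lemma ideal_prod_mono: "A \<subseteq> A' \<Longrightarrow> B \<subseteq> B' \<Longrightarrow> ideal_prod A B \<subseteq> ideal_prod A' B'"
  by (rule ideal_prod_least) (auto intro: ideal_prod_ideal ideal_prod_mem)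

lemma ideal_prod_UNIV: assumes "is_ideal A" shows "ideal_prod A UNIV = A"
proof
  from assms show "ideal_prod A UNIV \<subseteq> A" by (rule ideal_prod_sub_left)
  show "A \<subseteq> ideal_prod A UNIV"
    using ideal_prod_mem[of _ A 1 UNIV] by auto
qed

lemma ideal_prod_assoc1: "ideal_prod (ideal_prod A B) C \<subseteq> ideal_prod A (ideal_prod B C)"
proof (rule ideal_prod_least[OF ideal_prod_ideal])
  define D where "D = {x. \<forall>c\<in>C. x * c \<in> ideal_prod A (ideal_prod B C)}"
  have I: "is_ideal (ideal_prod A (ideal_prod B C))" by (rule ideal_prod_ideal)
  have D0: "0 \<in> D" unfolding D_def using ideal_0[OF I] by simp
  have Dadd: "x + y \<in> D" if "x \<in> D" "y \<in> D" for x y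
    using that unfolding D_def using ideal_add[OF I] by (simp add: distrib_right)
  have Dmult: "r * x \<in> D" if "x \<in> D" for r x
    using that unfolding D_def using ideal_mult_left[OF I] by (simp add: mult.assoc)
  have "is_ideal D" unfolding is_ideal_def using D0 Dadd Dmult by blast
  moreover have "a * b \<in> D" if "a \<in> A" "b \<in> B" for a b
    using that unfolding D_def by (auto simp: mult.assoc intro!: ideal_prod_mem)
  ultimately have "ideal_prod A B \<subseteq> D" by (intro ideal_prod_least) auto
  then show "x * c \<in> ideal_prod A (ideal_prod B C)" if "x \<in> ideal_prod A B" "c \<in> C" for x c
    using that unfolding D_def by auto
qed

lemma ideal_prod_assoc: "ideal_prod (ideal_prod A B) C = ideal_prod A (ideal_prod B C)"
proof
  show "ideal_prod (ideal_prod A B) C \<subseteq> ideal_prod A (ideal_prod B C)" by (rule ideal_prod_assoc1)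
  have "ideal_prod A (ideal_prod B C) = ideal_prod (ideal_prod C B) A"
    by (simp add: ideal_prod_comm)
  also have "\<dots> \<subseteq> ideal_prod C (ideal_prod B A)" by (rule ideal_prod_assoc1)
  also have "\<dots> = ideal_prod (ideal_prod A B) C" by (simp add: ideal_prod_comm)
  finally show "ideal_prod A (ideal_prod B C) \<subseteq> ideal_prod (ideal_prod A B) C" .
qed

lemma principal_ideal_ideal: "is_ideal (principal_ideal a)"
  unfolding is_ideal_def principal_ideal_def
proof (intro conjI ballI allI)
  show "0 \<in> {a * r |r. True}" by (rule CollectI, rule exI[of _ 0]) simp
next
  fix x y assume "x \<in> {a * r |r. True}" "y \<in> {a * r |r. True}"
  then obtain r s where "x = a * r" "y = a * s" by blast
  then have "x + y = a * (r + s)" by (simp add: distrib_left)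
  then show "x + y \<in> {a * r |r. True}" by blast
next
  fix c x assume "x \<in> {a * r |r. True}"
  then obtain r where "x = a * r" by blast
  then have "c * x = a * (c * r)" by (simp add: mult.left_commute)
  then show "c * x \<in> {a * r |r. True}" by blast
qed

lemma principal_mem: "a * r \<in> principal_ideal a"
  unfolding principal_ideal_def by auto

lemma principal_prod: "ideal_prod (principal_ideal a) (principal_ideal b) = principal_ideal (a * b)"
proof
  show "ideal_prod (principal_ideal a) (principal_ideal b) \<subseteq> principal_ideal (a * b)"
  proof (rule ideal_prod_least[OF principal_ideal_ideal])
    fix x y assume "x \<in> principal_ideal a" "y \<in> principal_ideal b"
    then obtain r s where "x = a * r" "y = b * s" unfolding principal_ideal_def by auto
    then have "x * y = (a * b) * (r * s)" by (simp add: algebra_simps)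
    then show "x * y \<in> principal_ideal (a * b)" by (simp add: principal_mem)
  qed
  show "principal_ideal (a * b) \<subseteq> ideal_prod (principal_ideal a) (principal_ideal b)"
  proof
    fix x assume "x \<in> principal_ideal (a * b)"
    then obtain r where "x = (a * b) * r" unfolding principal_ideal_def by auto
    then have "x = (a * 1) * (b * r)" by (simp add: algebra_simps)
    then show "x \<in> ideal_prod (principal_ideal a) (principal_ideal b)"
      by (simp only: ideal_prod_mem principal_mem)
  qed
qed

lemma ideal_pow_ideal: "is_ideal I \<Longrightarrow> is_ideal (ideal_pow I n)"
  by (cases n) (simp_all add: ideal_prod_ideal)

lemma ideal_sum_ideal: assumes "is_ideal A" "is_ideal B" shows "is_ideal (ideal_sum A B)"
  unfolding is_ideal_def ideal_sum_def
proof (intro conjI ballI allI)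
  have "(0::'a) + 0 \<in> {a + b |a b. a \<in> A \<and> b \<in> B}" using assms by (blast intro: ideal_0)
  then show "0 \<in> {a + b |a b. a \<in> A \<and> b \<in> B}" by simp
next
  fix x y assume "x \<in> {a + b |a b. a \<in> A \<and> b \<in> B}" "y \<in> {a + b |a b. a \<in> A \<and> b \<in> B}"
  then obtain a1 b1 a2 b2 where h: "x = a1 + b1" "y = a2 + b2" "a1 \<in> A" "b1 \<in> B" "a2 \<in> A" "b2 \<in> B"
    by blast
  then have "x + y = (a1 + a2) + (b1 + b2) \<and> a1 + a2 \<in> A \<and> b1 + b2 \<in> B"
    using assms by (simp add: ideal_add algebra_simps)
  then show "x + y \<in> {a + b |a b. a \<in> A \<and> b \<in> B}" by blast
next
  fix c x assume "x \<in> {a + b |a b. a \<in> A \<and> b \<in> B}"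
  then obtain a1 b1 where h: "x = a1 + b1" "a1 \<in> A" "b1 \<in> B" by blast
  then have "c * x = c * a1 + c * b1 \<and> c * a1 \<in> A \<and> c * b1 \<in> B"
    using assms by (simp add: ideal_mult_left distrib_left)
  then show "c * x \<in> {a + b |a b. a \<in> A \<and> b \<in> B}" by blast
qed



lemma ideal_pow_Suc_sub: "is_ideal I \<Longrightarrow> ideal_pow I (Suc n) \<subseteq> ideal_pow I n"
  by (simp add: ideal_prod_sub_right ideal_pow_ideal)

lemma ideal_pow_antimono: "is_ideal I \<Longrightarrow> m \<le> n \<Longrightarrow> ideal_pow I n \<subseteq> ideal_pow I m"
proof (induction n)
  case 0 then show ?case by simp
next
  case (Suc n)
  show ?case
  proof (cases "m = Suc n")
    case False
    then have "m \<le> n" using Suc.prems by simp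
    then show ?thesis using Suc ideal_pow_Suc_sub by blast
  qed simp
qed

lemma ideal_pow_1: "is_ideal I \<Longrightarrow> ideal_pow I 1 = I"
  by (simp add: ideal_prod_UNIV)

lemma ideal_prod_4: "ideal_prod (ideal_prod A B) (ideal_prod C D) = ideal_prod (ideal_prod A C) (ideal_prod B D)"
proof -
  have "ideal_prod (ideal_prod A B) (ideal_prod C D) = ideal_prod A (ideal_prod (ideal_prod B C) D)"
    by (simp add: ideal_prod_assoc)
  also have "\<dots> = ideal_prod A (ideal_prod (ideal_prod C B) D)"
    by (simp add: ideal_prod_comm[of B C])
  also have "\<dots> = ideal_prod (ideal_prod A C) (ideal_prod B D)"
    by (simp add: ideal_prod_assoc)
  finally show ?thesis .
qed

lemma ideal_pow_prod: "ideal_pow (ideal_prod A B) n = ideal_prod (ideal_pow A n) (ideal_pow B n)"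
  by (induction n) (simp_all add: ideal_prod_UNIV ideal_prod_4)

lemma principal_one: "principal_ideal 1 = UNIV"
  unfolding principal_ideal_def by auto

lemma principal_pow: "ideal_pow (principal_ideal d) n = principal_ideal (d ^ n)"
  by (induction n) (simp_all add: principal_one principal_prod)

lemma nzd_cancel: "nonzerodivisor d \<Longrightarrow> d * x = d * y \<Longrightarrow> x = y"
  unfolding nonzerodivisor_def by (metis eq_iff_diff_eq_0 right_diff_distrib)

lemma nzd_pow: "nonzerodivisor d \<Longrightarrow> nonzerodivisor (d ^ n)"
proof (induction n)
  case 0 then show ?case by (simp add: nonzerodivisor_def)
next
  case (Suc n)
  then show ?case unfolding nonzerodivisor_def by (metis mult.assoc power_Suc)
qed

lemma invertible_pow:
  assumes "is_ideal J" "nonzerodivisor d" "ideal_prod I J = principal_ideal d"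
  shows "is_ideal (ideal_pow J n) \<and> nonzerodivisor (d ^ n) \<and>
         ideal_prod (ideal_pow I n) (ideal_pow J n) = principal_ideal (d ^ n)"
  using assms by (simp add: ideal_pow_ideal nzd_pow flip: ideal_pow_prod principal_pow)

section \<open>Dual basis of an invertible ideal\<close>

lemma dual_basis:
  assumes L: "is_ideal L" and J: "is_ideal J" and d: "nonzerodivisor d"
    and LJ: "ideal_prod L J = principal_ideal d"
  obtains r :: nat and a :: "nat \<Rightarrow> 'r::comm_ring_1" and \<phi> :: "nat \<Rightarrow> 'r \<Rightarrow> 'r" where
    "\<forall>i<r. a i \<in> L"
    "\<forall>x\<in>L. x = (\<Sum>i<r. a i * \<phi> i x)"
    "\<forall>i x y. i < r \<longrightarrow> x \<in> L \<longrightarrow> y \<in> L \<longrightarrow> \<phi> i (x + y) = \<phi> i x + \<phi> i y"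
    "\<forall>i c x. i < r \<longrightarrow> x \<in> L \<longrightarrow> \<phi> i (c * x) = c * \<phi> i x"
    "\<forall>i A x. i < r \<longrightarrow> is_ideal A \<longrightarrow> x \<in> ideal_prod L A \<longrightarrow> \<phi> i x \<in> A"
proof -
  have "d \<in> ideal_prod L J" unfolding LJ using principal_mem[of d 1] by simp
  then obtain k :: nat and rr s where dk: "d = (\<Sum>i<k. rr i * s i)"
      and sk: "\<forall>i<k. s i \<in> {a * b |a b. a \<in> L \<and> b \<in> J}"
    unfolding ideal_prod_def by (rule ideal_genE)
  have "\<forall>i. \<exists>p. i < k \<longrightarrow> (fst p \<in> L \<and> snd p \<in> J \<and> s i = fst p * snd p)"
    using sk by force
  then obtain f where f: "\<And>i. i < k \<Longrightarrow> fst (f i) \<in> L \<and> snd (f i) \<in> J \<and> s i = fst (f i) * snd (f i)"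
    by metis
  define a where "a i = rr i * fst (f i)" for i
  define b where "b i = snd (f i)" for i
  define \<phi> where "\<phi> i x = (THE y. d * y = x * b i)" for i x
  have ex: "\<exists>y. d * y = x * b i" if "x \<in> L" "i < k" for x i
  proof -
    have "x * b i \<in> ideal_prod L J" using that f[of i] by (auto simp: b_def intro: ideal_prod_mem)
    then show ?thesis unfolding LJ principal_ideal_def by auto
  qed
  have phi: "d * \<phi> i x = x * b i" if xi: "x \<in> L" "i < k" for x i
  proof -
    obtain y where y: "d * y = x * b i" using ex[OF xi] by blast
    have "(THE y. d * y = x * b i) = y"
    proof (rule the_equality)
      show "d * y = x * b i" by (rule y)
      show "z = y" if "d * z = x * b i" for z using that y nzd_cancel[OF d] by metis
    qed
    then show ?thesis unfolding \<phi>_def using y by simp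
  qed
  have 1: "\<forall>i<k. a i \<in> L" using f L by (auto simp: a_def intro: ideal_mult_left)
  have 2: "\<forall>x\<in>L. x = (\<Sum>i<k. a i * \<phi> i x)"
  proof
    fix x assume x: "x \<in> L"
    have "d * (\<Sum>i<k. a i * \<phi> i x) = (\<Sum>i<k. rr i * fst (f i) * (d * \<phi> i x))"
      by (simp add: sum_distrib_left a_def algebra_simps)
    also have "\<dots> = (\<Sum>i<k. x * (rr i * s i))"
      by (rule sum.cong) (simp_all add: phi x f b_def algebra_simps)
    also have "\<dots> = d * x" by (simp add: dk sum_distrib_left mult.commute)
    finally show "x = (\<Sum>i<k. a i * \<phi> i x)" using nzd_cancel[OF d] by metis
  qed
  have 3: "\<phi> i (x + y) = \<phi> i x + \<phi> i y" if "i < k" "x \<in> L" "y \<in> L" for i x y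
  proof -
    have "x + y \<in> L" using that L by (simp add: ideal_add)
    then have "d * \<phi> i (x + y) = d * (\<phi> i x + \<phi> i y)"
      using that by (simp add: phi distrib_left distrib_right)
    then show ?thesis using nzd_cancel[OF d] by blast
  qed
  have 4: "\<phi> i (c * x) = c * \<phi> i x" if "i < k" "x \<in> L" for i c x
  proof -
    have "c * x \<in> L" using that L by (simp add: ideal_mult_left)
    then have "d * \<phi> i (c * x) = d * (c * \<phi> i x)"
      using that by (simp add: phi mult.left_commute mult.assoc)
    then show ?thesis using nzd_cancel[OF d] by blast
  qed
  have 5: "\<phi> i x \<in> A" if "i < k" "is_ideal A" "x \<in> ideal_prod L A" for i A x
  proof -
    define C where "C = {x. x \<in> L \<and> \<phi> i x \<in> A}"
    have "\<phi> i 0 = 0" using 4[of i 0 0] that L ideal_0 by force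
    then have C0: "0 \<in> C" unfolding C_def using L that(2) by (simp add: ideal_0)
    have "is_ideal C" unfolding is_ideal_def
      using C0 that L by (auto simp: C_def 3 4 ideal_add ideal_mult_left)
    moreover have "\<alpha> * \<kappa> \<in> C" if "\<alpha> \<in> L" "\<kappa> \<in> A" for \<alpha> \<kappa>
    proof -
      have "\<phi> i (\<alpha> * \<kappa>) = \<kappa> * \<phi> i \<alpha>" using 4 \<open>i < k\<close> that by (metis mult.commute)
      moreover have "\<kappa> * \<phi> i \<alpha> \<in> A" using that \<open>is_ideal A\<close> by (simp add: ideal_mult_right)
      moreover have "\<alpha> * \<kappa> \<in> L" using that L by (simp add: ideal_mult_right)
      ultimately show ?thesis unfolding C_def by simp
    qed
    ultimately have "ideal_prod L A \<subseteq> C" by (rule ideal_prod_least)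
    then show ?thesis using that(3) by (auto simp: C_def)
  qed
  show ?thesis
    by (rule that[of k a \<phi>]) (use 1 2 3 4 5 in blast)+
qed



section \<open>Submodules A M\<close>

context module
begin

lemma submodI: "y = (\<Sum>i<k. scale (a i) (m i)) \<Longrightarrow> \<forall>i<(k::nat). a i \<in> A \<Longrightarrow> y \<in> submod scale A"
  unfolding submod_def by blast

lemma submodE: "y \<in> submod scale A \<Longrightarrow>
  (\<And>k a m. y = (\<Sum>i<k. scale (a i) (m i)) \<Longrightarrow> \<forall>i<(k::nat). a i \<in> A \<Longrightarrow> P) \<Longrightarrow> P"
  unfolding submod_def by blast

lemma submod_subspace: "subspace (submod scale A)"
proof -
  have 0: "0 \<in> submod scale A"
    by (rule submodI[where k=0]) auto
  have add: "x + y \<in> submod scale A" if "x \<in> submod scale A" "y \<in> submod scale A" for x y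
  proof -
    from that(1) obtain k1 :: nat and a1 m1 where x: "x = (\<Sum>i<k1. scale (a1 i) (m1 i))" "\<forall>i<k1. a1 i \<in> A"
      by (rule submodE)
    from that(2) obtain k2 :: nat and a2 m2 where y: "y = (\<Sum>i<k2. scale (a2 i) (m2 i))" "\<forall>i<k2. a2 i \<in> A"
      by (rule submodE)
    define a where "a i = (if i < k1 then a1 i else a2 (i - k1))" for i
    define m where "m i = (if i < k1 then m1 i else m2 (i - k1))" for i
    have "x + y = (\<Sum>i<k1+k2. scale (a i) (m i))"
      unfolding sum_lessThan_add x y a_def m_def by simp
    moreover have "\<forall>i<k1+k2. a i \<in> A"
      using x y by (auto simp: a_def)
    ultimately show ?thesis by (rule submodI)
  qed
  have sc: "scale c x \<in> submod scale A" if "x \<in> submod scale A" for x c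
  proof -
    from that obtain k :: nat and a m where x: "x = (\<Sum>i<k. scale (a i) (m i))" "\<forall>i<k. a i \<in> A"
      by (rule submodE)
    have "scale c x = (\<Sum>i<k. scale (a i) (scale c (m i)))"
      unfolding x by (simp add: scale_sum_right mult.commute)
    then show ?thesis using x(2) by (rule submodI)
  qed
  show ?thesis unfolding subspace_def using 0 add sc by blast
qed

lemma submod_0: "0 \<in> submod scale A"
  by (rule subspace_0[OF submod_subspace])
lemma submod_add: "x \<in> submod scale A \<Longrightarrow> y \<in> submod scale A \<Longrightarrow> x + y \<in> submod scale A"
  by (rule subspace_add[OF submod_subspace])
lemma submod_diff: "x \<in> submod scale A \<Longrightarrow> y \<in> submod scale A \<Longrightarrow> x - y \<in> submod scale A"
  by (rule subspace_diff[OF submod_subspace])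
lemma submod_neg: "x \<in> submod scale A \<Longrightarrow> - x \<in> submod scale A"
  by (rule subspace_neg[OF submod_subspace])
lemma submod_scale: "x \<in> submod scale A \<Longrightarrow> scale c x \<in> submod scale A"
  by (rule subspace_scale[OF submod_subspace])
lemma submod_sum: "(\<And>x. x \<in> B \<Longrightarrow> f x \<in> submod scale A) \<Longrightarrow> sum f B \<in> submod scale A"
  by (rule subspace_sum[OF submod_subspace])

lemma submod_mem: "a \<in> A \<Longrightarrow> scale a m \<in> submod scale A"
  by (rule submodI[where k=1 and a="\<lambda>_. a" and m="\<lambda>_. m"]) auto

lemma submod_least:
  assumes "subspace S" "\<And>a m. a \<in> A \<Longrightarrow> scale a m \<in> S"
  shows "submod scale A \<subseteq> S"
proof
  fix y assume "y \<in> submod scale A"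
  then obtain k :: nat and a m where y: "y = (\<Sum>i<k. scale (a i) (m i))" "\<forall>i<k. a i \<in> A"
    by (rule submodE)
  show "y \<in> S" unfolding y(1) using y(2) assms by (intro subspace_sum) auto
qed

lemma submod_mono: "A \<subseteq> B \<Longrightarrow> submod scale A \<subseteq> submod scale B"
  by (rule submod_least[OF submod_subspace]) (auto intro: submod_mem)

lemma submod_UNIV: "x \<in> submod scale UNIV"
  using submod_mem[of 1 UNIV x] by simp

lemma submod_prod:
  assumes "a \<in> A" "y \<in> submod scale B"
  shows "scale a y \<in> submod scale (ideal_prod A B)"
proof -
  define S where "S = {y. scale a y \<in> submod scale (ideal_prod A B)}"
  have "0 \<in> S" unfolding S_def by (simp add: submod_0)
  moreover have "x + y \<in> S" if "x \<in> S" "y \<in> S" for x y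
    using that unfolding S_def by (simp add: scale_right_distrib submod_add)
  moreover have "scale c x \<in> S" if "x \<in> S" for c x
    using that submod_scale[of "scale a x" _ c] unfolding S_def by (simp add: mult.commute)
  ultimately have "subspace S" unfolding subspace_def by blast
  moreover have "scale b m \<in> S" if "b \<in> B" for b m
    unfolding S_def using assms(1) that by (simp add: submod_mem ideal_prod_mem)
  ultimately have "submod scale B \<subseteq> S" by (rule submod_least)
  then show ?thesis using assms(2) S_def by auto
qed

lemma adic_nbhd_0: "adic_nbhd scale {0} K k = submod scale (ideal_pow K k)"
  unfolding adic_nbhd_def by auto

lemma subspace_plus:
  assumes "subspace P" "subspace Q"
  shows "subspace {y + z |y z. y \<in> P \<and> z \<in> Q}"
proof -
  have "0 + 0 \<in> {y + z |y z. y \<in> P \<and> z \<in> Q}" using assms subspace_0 by blast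
  moreover have "x1 + x2 \<in> {y + z |y z. y \<in> P \<and> z \<in> Q}"
    if "x1 \<in> {y + z |y z. y \<in> P \<and> z \<in> Q}" "x2 \<in> {y + z |y z. y \<in> P \<and> z \<in> Q}" for x1 x2
  proof -
    from that obtain y1 z1 y2 z2 where "x1 = y1 + z1" "x2 = y2 + z2" "y1 \<in> P" "z1 \<in> Q" "y2 \<in> P" "z2 \<in> Q"
      by blast
    then have "x1 + x2 = (y1 + y2) + (z1 + z2) \<and> y1 + y2 \<in> P \<and> z1 + z2 \<in> Q"
      using assms by (simp add: subspace_add algebra_simps)
    then show ?thesis by blast
  qed
  moreover have "scale c x \<in> {y + z |y z. y \<in> P \<and> z \<in> Q}"
    if "x \<in> {y + z |y z. y \<in> P \<and> z \<in> Q}" for x c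
  proof -
    from that obtain y z where "x = y + z" "y \<in> P" "z \<in> Q" by blast
    then have "scale c x = scale c y + scale c z \<and> scale c y \<in> P \<and> scale c z \<in> Q"
      using assms by (simp add: subspace_scale scale_right_distrib)
    then show ?thesis by blast
  qed
  ultimately show ?thesis unfolding subspace_def by simp
qed

lemma adic_nbhd_subspace: "subspace (adic_nbhd scale (submod scale L) A k)"
  unfolding adic_nbhd_def by (intro subspace_plus submod_subspace)

end



locale core = module scale for scale :: "'r::comm_ring_1 \<Rightarrow> 'm::ab_group_add \<Rightarrow> 'm" +
  fixes K L :: "'r set" and r :: nat and a :: "nat \<Rightarrow> 'r" and \<phi> :: "nat \<Rightarrow> 'r \<Rightarrow> 'r" and cc :: nat
  assumes K: "is_ideal K" and L: "is_ideal L"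
    and sep: "\<And>x. (\<forall>k. x \<in> submod scale (ideal_pow K k)) \<Longrightarrow> x = 0"
    and compl: "\<And>f. (\<forall>k. f (Suc k) - f k \<in> submod scale (ideal_pow K k)) \<Longrightarrow>
                  \<exists>x. \<forall>k. x - f k \<in> submod scale (ideal_pow K k)"
    and flat: "\<And>n. n \<ge> 1 \<Longrightarrow> quot_flat scale (ideal_pow K n)"
    and a_in: "\<And>i. i < r \<Longrightarrow> a i \<in> L"
    and decomp: "\<And>x. x \<in> L \<Longrightarrow> x = (\<Sum>i<r. a i * \<phi> i x)"
    and lin_add: "\<And>i x y. i < r \<Longrightarrow> x \<in> L \<Longrightarrow> y \<in> L \<Longrightarrow> \<phi> i (x + y) = \<phi> i x + \<phi> i y"
    and lin_mult: "\<And>i t x. i < r \<Longrightarrow> x \<in> L \<Longrightarrow> \<phi> i (t * x) = t * \<phi> i x"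
    and AR: "\<And>i m x. i < r \<Longrightarrow> x \<in> L \<Longrightarrow> x \<in> ideal_pow K (m + cc) \<Longrightarrow> \<phi> i x \<in> ideal_pow K m"
    and cc: "cc \<ge> 1"
begin

lemma phi0: "i < r \<Longrightarrow> \<phi> i 0 = 0"
  using lin_mult[of i 0 0] ideal_0[OF L] by simp

lemma lin_sum:
  assumes "i < r" "\<And>t. t < (n::nat) \<Longrightarrow> x t \<in> L"
  shows "\<phi> i (\<Sum>t<n. b t * x t) = (\<Sum>t<n. b t * \<phi> i (x t))"
  using assms(2)
proof (induction n)
  case 0 then show ?case using phi0[OF assms(1)] by simp
next
  case (Suc n)
  have "(\<Sum>t<n. b t * x t) \<in> L"
    using Suc.prems by (intro ideal_sum[OF L] ideal_mult_left[OF L]) auto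
  moreover have "b n * x n \<in> L" using Suc.prems by (simp add: ideal_mult_left[OF L])
  ultimately show ?case using Suc by (simp add: lin_add[OF assms(1)] lin_mult[OF assms(1)])
qed

lemma Kpow_mono: "m \<le> n \<Longrightarrow> submod scale (ideal_pow K n) \<subseteq> submod scale (ideal_pow K m)"
  by (intro submod_mono ideal_pow_antimono K)

lemma G:
  assumes v: "(\<Sum>i<r. scale (a i) (v i)) \<in> submod scale (ideal_pow K (m + cc))" and j: "j < r"
  shows "(\<Sum>i<r. scale (\<phi> j (a i)) (v i)) \<in> submod scale (ideal_pow K m)"
proof -
  define A where "A = ideal_pow K (m + cc)"
  have "quot_flat scale A" unfolding A_def using cc by (intro flat) simp
  then obtain l :: nat and \<beta> y where
    h1: "\<forall>i<r. v i - (\<Sum>t<l. scale (\<beta> i t) (y t)) \<in> submod scale A" and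
    h2: "\<forall>t<l. (\<Sum>i<r. a i * \<beta> i t) \<in> A"
    using v unfolding quot_flat_def A_def by blast
  have sub: "submod scale A \<subseteq> submod scale (ideal_pow K m)"
    unfolding A_def by (rule Kpow_mono) simp
  have e1: "(\<Sum>i<r. scale (\<phi> j (a i)) (v i - (\<Sum>t<l. scale (\<beta> i t) (y t)))) \<in> submod scale (ideal_pow K m)"
    using h1 sub by (intro submod_sum submod_scale) auto
  have e2: "(\<Sum>t<l. scale (\<phi> j (\<Sum>i<r. \<beta> i t * a i)) (y t)) \<in> submod scale (ideal_pow K m)"
  proof (intro submod_sum submod_mem)
    fix t assume t: "t \<in> {..<l}"
    have "(\<Sum>i<r. \<beta> i t * a i) \<in> L"
      using a_in by (intro ideal_sum[OF L] ideal_mult_left[OF L]) auto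
    moreover have "(\<Sum>i<r. \<beta> i t * a i) \<in> ideal_pow K (m + cc)"
      using h2 t unfolding A_def by (simp add: mult.commute)
    ultimately show "\<phi> j (\<Sum>i<r. \<beta> i t * a i) \<in> ideal_pow K m" using AR j by blast
  qed
  have "(\<Sum>t<l. scale (\<phi> j (\<Sum>i<r. \<beta> i t * a i)) (y t)) = (\<Sum>t<l. scale (\<Sum>i<r. \<beta> i t * \<phi> j (a i)) (y t))"
    using j a_in by (intro sum.cong refl) (simp add: lin_sum)
  also have "\<dots> = (\<Sum>t<l. \<Sum>i<r. scale (\<beta> i t * \<phi> j (a i)) (y t))"
    by (simp add: scale_sum_left)
  also have "\<dots> = (\<Sum>i<r. \<Sum>t<l. scale (\<beta> i t * \<phi> j (a i)) (y t))"
    by (rule sum.swap)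
  also have "\<dots> = (\<Sum>i<r. scale (\<phi> j (a i)) (\<Sum>t<l. scale (\<beta> i t) (y t)))"
    by (simp add: scale_sum_right mult.commute)
  finally have eq2: "(\<Sum>t<l. scale (\<phi> j (\<Sum>i<r. \<beta> i t * a i)) (y t)) =
      (\<Sum>i<r. scale (\<phi> j (a i)) (\<Sum>t<l. scale (\<beta> i t) (y t)))" .
  have "(\<Sum>i<r. scale (\<phi> j (a i)) (v i)) =
      (\<Sum>i<r. scale (\<phi> j (a i)) (v i - (\<Sum>t<l. scale (\<beta> i t) (y t)))) +
      (\<Sum>i<r. scale (\<phi> j (a i)) (\<Sum>t<l. scale (\<beta> i t) (y t)))"
    by (simp add: scale_right_diff_distrib sum_subtractf)
  then show ?thesis using e1 e2 eq2 by (simp add: submod_add)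
qed

lemma inj:
  assumes "\<forall>j<r. \<mu> j = (\<Sum>i<r. scale (\<phi> j (a i)) (\<mu> i))" "(\<Sum>i<r. scale (a i) (\<mu> i)) = 0" "j < r"
  shows "\<mu> j = 0"
proof (rule sep, rule allI)
  fix m
  have "(\<Sum>i<r. scale (a i) (\<mu> i)) \<in> submod scale (ideal_pow K (m + cc))"
    using assms(2) by (simp add: submod_0)
  then have "(\<Sum>i<r. scale (\<phi> j (a i)) (\<mu> i)) \<in> submod scale (ideal_pow K m)"
    using assms(3) by (rule G)
  then show "\<mu> j \<in> submod scale (ideal_pow K m)" using assms(1,3) by simp
qed

lemma repr:
  assumes "y \<in> submod scale L"
  shows "\<exists>u. y = (\<Sum>i<r. scale (a i) (u i))"
proof -
  define S where "S = {y. \<exists>u. y = (\<Sum>i<r. scale (a i) (u i))}"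
  have "0 \<in> S" unfolding S_def by (rule CollectI, rule exI[of _ "\<lambda>_. 0"]) simp
  moreover have "x + y \<in> S" if "x \<in> S" "y \<in> S" for x y
  proof -
    from that obtain u w where "x = (\<Sum>i<r. scale (a i) (u i))" "y = (\<Sum>i<r. scale (a i) (w i))"
      unfolding S_def by blast
    then have eq: "x + y = (\<Sum>i<r. scale (a i) (u i + w i))"
      by (simp add: scale_right_distrib sum.distrib)
    show ?thesis unfolding S_def mem_Collect_eq by (rule exI[of _ "\<lambda>i. u i + w i"]) (simp add: eq)
  qed
  moreover have "scale t x \<in> S" if "x \<in> S" for t x
  proof -
    from that obtain u where "x = (\<Sum>i<r. scale (a i) (u i))"
      unfolding S_def by blast
    then have eq: "scale t x = (\<Sum>i<r. scale (a i) (scale t (u i)))"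
      by (simp add: scale_sum_right mult.commute)
    show ?thesis unfolding S_def mem_Collect_eq by (rule exI[of _ "\<lambda>i. scale t (u i)"]) (simp add: eq)
  qed
  ultimately have "subspace S" unfolding subspace_def by blast
  moreover have "scale b m \<in> S" if "b \<in> L" for b m
  proof -
    have "scale b m = scale (\<Sum>i<r. a i * \<phi> i b) m" using decomp[OF that] by simp
    also have "\<dots> = (\<Sum>i<r. scale (a i) (scale (\<phi> i b) m))"
      by (simp add: scale_sum_left)
    finally have eq: "scale b m = (\<Sum>i<r. scale (a i) (scale (\<phi> i b) m))" .
    show ?thesis unfolding S_def mem_Collect_eq by (rule exI[of _ "\<lambda>i. scale (\<phi> i b) m"]) (simp add: eq)
  qed
  ultimately have "submod scale L \<subseteq> S" by (rule submod_least)
  then show ?thesis using assms S_def by auto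
qed

lemma sum_a_mem: "(\<Sum>i<r. scale (a i) (u i)) \<in> submod scale L"
  using a_in by (intro submod_sum submod_mem) auto

lemma a_phi_sum: "(\<Sum>j<r. scale (a j) (\<Sum>i<r. scale (\<phi> j (a i)) (u i))) = (\<Sum>i<r. scale (a i) (u i))"
proof -
  have "(\<Sum>j<r. scale (a j) (\<Sum>i<r. scale (\<phi> j (a i)) (u i))) = (\<Sum>j<r. \<Sum>i<r. scale (a j * \<phi> j (a i)) (u i))"
    by (simp add: scale_sum_right)
  also have "\<dots> = (\<Sum>i<r. \<Sum>j<r. scale (a j * \<phi> j (a i)) (u i))" by (rule sum.swap)
  also have "\<dots> = (\<Sum>i<r. scale (\<Sum>j<r. a j * \<phi> j (a i)) (u i))" by (simp add: scale_sum_left)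
  also have "\<dots> = (\<Sum>i<r. scale (a i) (u i))"
    using a_in decomp by (intro sum.cong refl) (metis lessThan_iff)
  finally show ?thesis .
qed

lemma sepL:
  assumes x: "\<forall>k. x \<in> {y + z |y z. y \<in> submod scale (ideal_pow K k) \<and> z \<in> submod scale L}"
  shows "x \<in> submod scale L"
proof -
  have "\<forall>k. \<exists>u. x - (\<Sum>i<r. scale (a i) (u i)) \<in> submod scale (ideal_pow K k)"
  proof
    fix k
    from x obtain y z where "x = y + z" "y \<in> submod scale (ideal_pow K k)" "z \<in> submod scale L" by blast
    moreover from repr[OF this(3)] obtain u where "z = (\<Sum>i<r. scale (a i) (u i))" by blast
    ultimately have "x - (\<Sum>i<r. scale (a i) (u i)) \<in> submod scale (ideal_pow K k)" by simp
    then show "\<exists>u. x - (\<Sum>i<r. scale (a i) (u i)) \<in> submod scale (ideal_pow K k)" by blast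
  qed
  then obtain U where U: "\<And>k. x - (\<Sum>i<r. scale (a i) (U k i)) \<in> submod scale (ideal_pow K k)"
    by metis
  define w where "w k j = (\<Sum>i<r. scale (\<phi> j (a i)) (U (k + cc) i))" for k j
  have cauchy: "w (Suc k) j - w k j \<in> submod scale (ideal_pow K k)" if j: "j < r" for k j
  proof -
    have d: "(\<Sum>i<r. scale (a i) (U (Suc k + cc) i - U (k + cc) i)) =
        (x - (\<Sum>i<r. scale (a i) (U (k + cc) i))) - (x - (\<Sum>i<r. scale (a i) (U (Suc k + cc) i)))"
      by (simp add: scale_right_diff_distrib sum_subtractf)
    have hB: "x - (\<Sum>i<r. scale (a i) (U (Suc k + cc) i)) \<in> submod scale (ideal_pow K (k + cc))"
      using subsetD[OF Kpow_mono[of "k + cc" "Suc k + cc"] U[of "Suc k + cc"]] by simp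
    have "(\<Sum>i<r. scale (a i) (U (Suc k + cc) i - U (k + cc) i)) \<in> submod scale (ideal_pow K (k + cc))"
      unfolding d by (rule submod_diff[OF U hB])
    from G[OF this j] show ?thesis
      unfolding w_def by (simp add: scale_right_diff_distrib sum_subtractf)
  qed
  have "\<forall>j. \<exists>z. j < r \<longrightarrow> (\<forall>k. z - w k j \<in> submod scale (ideal_pow K k))"
    using compl[of "\<lambda>k. w k _"] cauchy by blast
  then obtain Z where Z: "\<And>j k. j < r \<Longrightarrow> Z j - w k j \<in> submod scale (ideal_pow K k)"
    by metis
  have "x - (\<Sum>j<r. scale (a j) (Z j)) = 0"
  proof (rule sep, rule allI)
    fix k
    have d2: "x - (\<Sum>j<r. scale (a j) (Z j)) =
        (x - (\<Sum>i<r. scale (a i) (U (k + cc) i))) - (\<Sum>j<r. scale (a j) (Z j - w k j))"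
      using a_phi_sum[of "U (k + cc)"]
      by (simp add: w_def scale_right_diff_distrib sum_subtractf)
    have h1: "x - (\<Sum>i<r. scale (a i) (U (k + cc) i)) \<in> submod scale (ideal_pow K k)"
      using subsetD[OF Kpow_mono[of k "k + cc"] U[of "k + cc"]] by simp
    have h2: "(\<Sum>j<r. scale (a j) (Z j - w k j)) \<in> submod scale (ideal_pow K k)"
      using Z by (intro submod_sum submod_scale) auto
    show "x - (\<Sum>j<r. scale (a j) (Z j)) \<in> submod scale (ideal_pow K k)"
      unfolding d2 by (rule submod_diff[OF h1 h2])
  qed
  then have "x = (\<Sum>j<r. scale (a j) (Z j))" by simp
  then show ?thesis using sum_a_mem by simp
qed

end



section \<open>Estimates for powers of K = pi R + I\<close>

lemma ideal_prod_mult_in: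
  assumes "x \<in> ideal_prod A B" "c \<in> C"
  shows "c * x \<in> ideal_prod A (ideal_prod C B)"
proof -
  have "c * x \<in> ideal_prod C (ideal_prod A B)" by (rule ideal_prod_mem[OF assms(2) assms(1)])
  also have "\<dots> = ideal_prod (ideal_prod C A) B" by (simp add: ideal_prod_assoc)
  also have "\<dots> = ideal_prod (ideal_prod A C) B" by (simp add: ideal_prod_comm[of C A])
  also have "\<dots> = ideal_prod A (ideal_prod C B)" by (simp add: ideal_prod_assoc)
  finally show ?thesis .
qed

lemma ideal_sumI: "a \<in> A \<Longrightarrow> b \<in> B \<Longrightarrow> a + b \<in> ideal_sum A B"
  unfolding ideal_sum_def by blast

lemma ideal_sumE: "x \<in> ideal_sum A B \<Longrightarrow> (\<And>a b. x = a + b \<Longrightarrow> a \<in> A \<Longrightarrow> b \<in> B \<Longrightarrow> P) \<Longrightarrow> P"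
  unfolding ideal_sum_def by blast

lemma principal_memE: "x \<in> principal_ideal a \<Longrightarrow> (\<And>r. x = a * r \<Longrightarrow> P) \<Longrightarrow> P"
  unfolding principal_ideal_def by blast

context
  fixes \<pi> :: "'r::comm_ring_1" and I :: "'r set"
  assumes I: "is_ideal I"
begin

definition "KK = ideal_sum (principal_ideal \<pi>) I"

lemma KK_ideal: "is_ideal KK"
  unfolding KK_def by (intro ideal_sum_ideal principal_ideal_ideal I)

lemma pi_KK: "\<pi> \<in> KK"
  unfolding KK_def using ideal_sumI[OF principal_mem[of \<pi> 1] ideal_0[OF I]] by simp

lemma pi_pow_KK: "\<pi> ^ k \<in> ideal_pow KK k"
  by (induction k) (simp_all add: ideal_prod_mem pi_KK)

lemma KK_elem: "k \<in> KK \<Longrightarrow> (\<And>s \<alpha>. k = \<pi> * s + \<alpha> \<Longrightarrow> \<alpha> \<in> I \<Longrightarrow> P) \<Longrightarrow> P"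
  unfolding KK_def by (metis ideal_sumE principal_memE)

lemma sum_trivial:
  assumes "p = 0 \<or> q = 0"
  shows "x \<in> ideal_sum (principal_ideal (\<pi> ^ p)) (ideal_pow I q)"
proof (cases "p = 0")
  case True
  have "x = \<pi> ^ p * x + 0" using True by simp
  then show ?thesis using ideal_sumI[OF principal_mem ideal_0[OF ideal_pow_ideal[OF I]]] by metis
next
  case False
  then have "q = 0" using assms by simp
  have "x = \<pi> ^ p * 0 + x" by simp
  then show ?thesis using ideal_sumI[OF principal_mem[of "\<pi> ^ p" 0], of x "ideal_pow I q"] \<open>q = 0\<close> by simp
qed

lemma KK_pow_pq:
  "p + q \<le> m + 1 \<Longrightarrow> ideal_pow KK m \<subseteq> ideal_sum (principal_ideal (\<pi> ^ p)) (ideal_pow I q)"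
proof (induction m arbitrary: p q)
  case 0
  then have "p = 0 \<or> q = 0" by arith
  then show ?case using sum_trivial by blast
next
  case (Suc m)
  show ?case
  proof (cases "p = 0 \<or> q = 0")
    case True then show ?thesis using sum_trivial by blast
  next
    case False
    then obtain p' q' where pq: "p = Suc p'" "q = Suc q'" by (metis not0_implies_Suc)
    have "p' + q \<le> m + 1" using Suc.prems pq by simp
    then have IH1: "ideal_pow KK m \<subseteq> ideal_sum (principal_ideal (\<pi> ^ p')) (ideal_pow I q)"
      by (rule Suc.IH)
    have "p + q' \<le> m + 1" using Suc.prems pq by simp
    then have IH2: "ideal_pow KK m \<subseteq> ideal_sum (principal_ideal (\<pi> ^ p)) (ideal_pow I q')"
      by (rule Suc.IH)
    show ?thesis unfolding ideal_pow.simps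
    proof (rule ideal_prod_least)
      show "is_ideal (ideal_sum (principal_ideal (\<pi> ^ p)) (ideal_pow I q))"
        by (intro ideal_sum_ideal principal_ideal_ideal ideal_pow_ideal I)
    next
      fix k y assume k: "k \<in> KK" and y: "y \<in> ideal_pow KK m"
      from k obtain s \<alpha> where k': "k = \<pi> * s + \<alpha>" "\<alpha> \<in> I" by (rule KK_elem)
      from IH1 y obtain b1 \<beta>1 where y1: "y = b1 + \<beta>1" "b1 \<in> principal_ideal (\<pi> ^ p')" "\<beta>1 \<in> ideal_pow I q"
        by (meson ideal_sumE subsetD)
      from IH2 y obtain b2 \<beta>2 where y2: "y = b2 + \<beta>2" "b2 \<in> principal_ideal (\<pi> ^ p)" "\<beta>2 \<in> ideal_pow I q'"
        by (meson ideal_sumE subsetD)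
      from y1(2) obtain \<rho>1 where r1: "b1 = \<pi> ^ p' * \<rho>1" by (rule principal_memE)
      from y2(2) obtain \<rho>2 where r2: "b2 = \<pi> ^ p * \<rho>2" by (rule principal_memE)
      have "k * y = \<pi> * s * y + \<alpha> * y" by (simp add: k' distrib_right)
      also have "\<dots> = \<pi> * s * (\<pi> ^ p' * \<rho>1 + \<beta>1) + \<alpha> * (\<pi> ^ p * \<rho>2 + \<beta>2)"
        using y1 y2 r1 r2 by metis
      also have "\<dots> = \<pi> ^ p * (s * \<rho>1 + \<alpha> * \<rho>2) + (\<pi> * s * \<beta>1 + \<alpha> * \<beta>2)"
        by (simp add: pq algebra_simps)
      finally have eq: "k * y = \<pi> ^ p * (s * \<rho>1 + \<alpha> * \<rho>2) + (\<pi> * s * \<beta>1 + \<alpha> * \<beta>2)" .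
      have "\<pi> * s * \<beta>1 \<in> ideal_pow I q" using y1(3) ideal_pow_ideal[OF I] by (simp add: ideal_mult_left)
      moreover have "\<alpha> * \<beta>2 \<in> ideal_pow I q" using k'(2) y2(3) pq by (simp add: ideal_prod_mem)
      ultimately have "\<pi> * s * \<beta>1 + \<alpha> * \<beta>2 \<in> ideal_pow I q"
        using ideal_pow_ideal[OF I] by (simp add: ideal_add)
      then show "k * y \<in> ideal_sum (principal_ideal (\<pi> ^ p)) (ideal_pow I q)"
        unfolding eq by (intro ideal_sumI principal_mem)
    qed
  qed
qed

lemma KK_step:
  "ideal_pow KK (Suc j) \<subseteq> ideal_sum (principal_ideal (\<pi> ^ Suc j)) (ideal_prod I (ideal_pow KK j))"
proof (induction j)
  case 0
  show ?case unfolding ideal_pow.simps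
  proof (rule ideal_prod_least)
    show "is_ideal (ideal_sum (principal_ideal (\<pi> ^ Suc 0)) (ideal_prod I UNIV))"
      by (intro ideal_sum_ideal principal_ideal_ideal ideal_prod_ideal)
  next
    fix k y assume k: "k \<in> KK" and y: "y \<in> (UNIV :: 'r set)"
    from k obtain s \<alpha> where k': "k = \<pi> * s + \<alpha>" "\<alpha> \<in> I" by (rule KK_elem)
    have "k * y = \<pi> ^ Suc 0 * (s * y) + \<alpha> * y" by (simp add: k' algebra_simps)
    then show "k * y \<in> ideal_sum (principal_ideal (\<pi> ^ Suc 0)) (ideal_prod I UNIV)"
      using k'(2) by (metis ideal_sumI principal_mem ideal_prod_mem UNIV_I)
  qed
next
  case (Suc j)
  show ?case unfolding ideal_pow.simps(2)[of KK "Suc j"]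
  proof (rule ideal_prod_least)
    show "is_ideal (ideal_sum (principal_ideal (\<pi> ^ Suc (Suc j))) (ideal_prod I (ideal_pow KK (Suc j))))"
      by (intro ideal_sum_ideal principal_ideal_ideal ideal_prod_ideal)
  next
    fix k y assume k: "k \<in> KK" and y: "y \<in> ideal_pow KK (Suc j)"
    from k obtain s \<alpha> where k': "k = \<pi> * s + \<alpha>" "\<alpha> \<in> I" by (rule KK_elem)
    from Suc y obtain b t where yt: "y = b + t" "b \<in> principal_ideal (\<pi> ^ Suc j)"
        "t \<in> ideal_prod I (ideal_pow KK j)"
      by (meson ideal_sumE subsetD)
    from yt(2) obtain \<rho> where rho: "b = \<pi> ^ Suc j * \<rho>" by (rule principal_memE)
    have eq: "k * y = \<pi> ^ Suc (Suc j) * (s * \<rho>) + ((\<pi> * s) * t + \<alpha> * y)"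
      by (simp add: k' yt rho algebra_simps)
    have "(\<pi> * s) * t \<in> ideal_prod I (ideal_pow KK (Suc j))"
      using ideal_prod_mult_in[OF yt(3), of "\<pi> * s" KK] pi_KK KK_ideal
      by (simp add: ideal_mult_right)
    moreover have "\<alpha> * y \<in> ideal_prod I (ideal_pow KK (Suc j))"
      using k'(2) y by (rule ideal_prod_mem)
    ultimately have "(\<pi> * s) * t + \<alpha> * y \<in> ideal_prod I (ideal_pow KK (Suc j))"
      by (simp add: ideal_add[OF ideal_prod_ideal])
    then show "k * y \<in> ideal_sum (principal_ideal (\<pi> ^ Suc (Suc j))) (ideal_prod I (ideal_pow KK (Suc j)))"
      unfolding eq by (intro ideal_sumI principal_mem)
  qed
qed

lemma AR_base:
  assumes tors: "\<forall>r k. \<pi> ^ k * r \<in> I \<longrightarrow> \<pi> ^ N * r \<in> I"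
    and x: "x \<in> I" "x \<in> ideal_pow KK (m + N + 1)"
  shows "x \<in> ideal_prod I (ideal_pow KK m)"
proof -
  from x(2) KK_step[of "m + N"] obtain b t where bt: "x = b + t" "b \<in> principal_ideal (\<pi> ^ Suc (m + N))"
      "t \<in> ideal_prod I (ideal_pow KK (m + N))"
    by (metis Suc_eq_plus1 ideal_sumE subsetD)
  from bt(2) obtain \<rho> where rho: "b = \<pi> ^ Suc (m + N) * \<rho>" by (rule principal_memE)
  have tI: "t \<in> I" using bt(3) ideal_prod_sub_left[OF I] by blast
  have "\<pi> ^ Suc (m + N) * \<rho> \<in> I" using x(1) tI bt(1) rho by (metis ideal_diff[OF I] add_diff_cancel_right')
  then have N: "\<pi> ^ N * \<rho> \<in> I" using tors by blast
  have "b = (\<pi> * (\<pi> ^ N * \<rho>)) * \<pi> ^ m" by (simp add: rho algebra_simps power_add)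
  moreover have "\<pi> * (\<pi> ^ N * \<rho>) \<in> I" using N by (simp add: ideal_mult_left[OF I])
  ultimately have "b \<in> ideal_prod I (ideal_pow KK m)" by (simp add: ideal_prod_mem pi_pow_KK)
  moreover have "t \<in> ideal_prod I (ideal_pow KK m)"
    using bt(3) ideal_prod_mono[OF order_refl ideal_pow_antimono[OF KK_ideal, of m "m + N"]] by auto
  ultimately show ?thesis using bt(1) by (simp add: ideal_add[OF ideal_prod_ideal])
qed

end



lemma AR_pow:
  assumes I: "is_ideal I" and J: "is_ideal J" and d: "nonzerodivisor d"
    and IJ: "ideal_prod I J = principal_ideal d"
    and tors: "\<forall>r k. \<pi> ^ k * r \<in> I \<longrightarrow> \<pi> ^ N * r \<in> I"
  shows "x \<in> ideal_pow I n \<Longrightarrow> x \<in> ideal_pow (KK \<pi> I) (m + n * (N + 1)) \<Longrightarrow>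
         x \<in> ideal_prod (ideal_pow I n) (ideal_pow (KK \<pi> I) m)"
proof (induction n arbitrary: m x)
  case 0
  have "ideal_prod UNIV (ideal_pow (KK \<pi> I) m) = ideal_pow (KK \<pi> I) m"
    using ideal_prod_UNIV[OF ideal_pow_ideal[OF KK_ideal[OF I]]] by (simp add: ideal_prod_comm)
  then show ?case using 0 by simp
next
  case (Suc n)
  let ?K = "KK \<pi> I"
  have xn: "x \<in> ideal_pow I n" using Suc.prems(1) ideal_pow_Suc_sub[OF I] by blast
  have "x \<in> ideal_pow ?K ((m + N + 1) + n * (N + 1))" using Suc.prems(2) by (simp add: algebra_simps)
  then have x1: "x \<in> ideal_prod (ideal_pow I n) (ideal_pow ?K (m + N + 1))" using Suc.IH xn by blast
  have inv1: "is_ideal (ideal_pow J n)" and inv2: "nonzerodivisor (d ^ n)" and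
    inv3: "ideal_prod (ideal_pow I n) (ideal_pow J n) = principal_ideal (d ^ n)"
    using invertible_pow[OF J d IJ] by auto
  obtain r :: nat and a \<phi> where db: "\<forall>i<r. a i \<in> ideal_pow I n"
    "\<forall>x\<in>ideal_pow I n. x = (\<Sum>i<r. a i * \<phi> i x)"
    "\<forall>i x y. i < r \<longrightarrow> x \<in> ideal_pow I n \<longrightarrow> y \<in> ideal_pow I n \<longrightarrow> \<phi> i (x + y) = \<phi> i x + \<phi> i y"
    "\<forall>i c x. i < r \<longrightarrow> x \<in> ideal_pow I n \<longrightarrow> \<phi> i (c * x) = c * \<phi> i x"
    "\<forall>i A x. i < r \<longrightarrow> is_ideal A \<longrightarrow> x \<in> ideal_prod (ideal_pow I n) A \<longrightarrow> \<phi> i x \<in> A"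
    by (rule dual_basis[OF ideal_pow_ideal[OF I] inv1 inv2 inv3])
  have "a i * \<phi> i x \<in> ideal_prod (ideal_pow I (Suc n)) (ideal_pow ?K m)" if i: "i < r" for i
  proof -
    have "\<phi> i x \<in> ideal_pow ?K (m + N + 1)"
      using db(5) i x1 ideal_pow_ideal[OF KK_ideal[OF I]] by blast
    moreover have "x \<in> ideal_prod (ideal_pow I n) I"
      using Suc.prems(1) by (simp add: ideal_prod_comm)
    then have "\<phi> i x \<in> I" using db(5) i I by blast
    ultimately have "\<phi> i x \<in> ideal_prod I (ideal_pow ?K m)"
      using AR_base[OF I tors] by blast
    then have "a i * \<phi> i x \<in> ideal_prod (ideal_pow I n) (ideal_prod I (ideal_pow ?K m))"
      using db(1) i by (simp add: ideal_prod_mem)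
    also have "\<dots> = ideal_prod (ideal_prod I (ideal_pow I n)) (ideal_pow ?K m)"
      by (simp add: ideal_prod_assoc[symmetric] ideal_prod_comm[of "ideal_pow I n" I])
    finally show ?thesis by simp
  qed
  then have "(\<Sum>i<r. a i * \<phi> i x) \<in> ideal_prod (ideal_pow I (Suc n)) (ideal_pow ?K m)"
    by (intro ideal_sum[OF ideal_prod_ideal]) auto
  then show ?case using db(2) xn by metis
qed

context module
begin

lemma submod_principal: "y \<in> submod scale (principal_ideal b) \<Longrightarrow> \<exists>g. y = scale b g"
proof -
  define S where "S = {y. \<exists>g. y = scale b g}"
  have "0 \<in> S" unfolding S_def by (rule CollectI, rule exI[of _ 0]) simp
  moreover have "x + y \<in> S" if "x \<in> S" "y \<in> S" for x y
  proof -
    from that obtain g h where "x = scale b g" "y = scale b h" unfolding S_def by blast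
    then have "x + y = scale b (g + h)" by (simp add: scale_right_distrib)
    then show ?thesis unfolding S_def by blast
  qed
  moreover have "scale c x \<in> S" if "x \<in> S" for c x
  proof -
    from that obtain g where "x = scale b g" unfolding S_def by blast
    then have "scale c x = scale b (scale c g)" by (simp add: mult.commute)
    then show ?thesis unfolding S_def by blast
  qed
  ultimately have "subspace S" unfolding subspace_def by blast
  moreover have "scale a m \<in> S" if "a \<in> principal_ideal b" for a m
  proof -
    from that obtain t where "a = b * t" by (rule principal_memE)
    then have "scale a m = scale b (scale t m)" by simp
    then show ?thesis unfolding S_def by blast
  qed
  ultimately have "submod scale (principal_ideal b) \<subseteq> S" by (rule submod_least)
  then show "y \<in> submod scale (principal_ideal b) \<Longrightarrow> \<exists>g. y = scale b g" unfolding S_def by blast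
qed

lemma nb_elem:
  assumes "y \<in> adic_nbhd scale (submod scale L) (principal_ideal \<pi>) k"
  shows "\<exists>g z. y = scale (\<pi> ^ k) g + z \<and> z \<in> submod scale L"
proof -
  from assms obtain u z where "y = u + z" "u \<in> submod scale (principal_ideal (\<pi> ^ k))" "z \<in> submod scale L"
    unfolding adic_nbhd_def principal_pow by blast
  then show ?thesis using submod_principal by blast
qed

lemma nb_pi: "scale (\<pi> ^ k) g \<in> adic_nbhd scale (submod scale L) (principal_ideal \<pi>) k"
proof -
  have "scale (\<pi> ^ k) g \<in> submod scale (ideal_pow (principal_ideal \<pi>) k)"
    unfolding principal_pow using principal_mem[of "\<pi> ^ k" 1] by (intro submod_mem) simp
  then have "scale (\<pi> ^ k) g + 0 \<in> adic_nbhd scale (submod scale L) (principal_ideal \<pi>) k"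
    unfolding adic_nbhd_def using submod_0 by blast
  then show ?thesis by simp
qed

lemma nb_L: "z \<in> submod scale L \<Longrightarrow> z \<in> adic_nbhd scale (submod scale L) (principal_ideal \<pi>) k"
proof -
  assume "z \<in> submod scale L"
  then have "0 + z \<in> adic_nbhd scale (submod scale L) (principal_ideal \<pi>) k"
    unfolding adic_nbhd_def using submod_0 by blast
  then show ?thesis by simp
qed

lemma complL:
  assumes compl: "\<And>f. (\<forall>k. f (Suc k) - f k \<in> submod scale (ideal_pow K k)) \<Longrightarrow>
                  \<exists>x. \<forall>k. x - f k \<in> submod scale (ideal_pow K k)"
    and pik: "\<And>k. \<pi> ^ k \<in> ideal_pow K k"
    and incl: "\<And>k. submod scale (ideal_pow K (k + e)) \<subseteq> adic_nbhd scale (submod scale L) (principal_ideal \<pi>) k"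
    and f: "\<forall>k. f (Suc k) - f k \<in> adic_nbhd scale (submod scale L) (principal_ideal \<pi>) k"
  shows "\<exists>x. \<forall>k. x - f k \<in> adic_nbhd scale (submod scale L) (principal_ideal \<pi>) k"
proof -
  let ?N = "\<lambda>k. adic_nbhd scale (submod scale L) (principal_ideal \<pi>) k"
  have "\<forall>k. \<exists>p. f (Suc k) - f k = scale (\<pi> ^ k) (fst p) + snd p \<and> snd p \<in> submod scale L"
    using f nb_elem by fastforce
  then obtain P where P: "\<And>k. f (Suc k) - f k = scale (\<pi> ^ k) (fst (P k)) + snd (P k) \<and> snd (P k) \<in> submod scale L"
    by metis
  define G where "G k = fst (P k)" for k
  define Z where "Z k = snd (P k)" for k
  have GZ: "f (Suc k) - f k = scale (\<pi> ^ k) (G k) + Z k" "Z k \<in> submod scale L" for k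
    using P[of k] unfolding G_def Z_def by auto
  define F where "F k = f 0 + (\<Sum>j<k. scale (\<pi> ^ j) (G j))" for k
  have "\<forall>k. F (Suc k) - F k \<in> submod scale (ideal_pow K k)"
    unfolding F_def using pik by (simp add: submod_mem)
  then obtain X where X: "\<And>k. X - F k \<in> submod scale (ideal_pow K k)" using compl by blast
  have c1: "F k - f k \<in> submod scale L" for k
  proof (induction k)
    case 0 then show ?case by (simp add: F_def submod_0)
  next
    case (Suc k)
    have "F (Suc k) - f (Suc k) = (F k - f k) - Z k"
      using GZ(1)[of k] unfolding F_def by (simp add: algebra_simps)
    then show ?case using Suc GZ(2)[of k] by (simp add: submod_diff)
  qed
  have c2: "F (k + e') - F k \<in> ?N k" for k e'
  proof (induction e')
    case 0 then show ?case using nb_L[OF submod_0] by simp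
  next
    case (Suc e')
    have "F (k + Suc e') - F k = (F (k + e') - F k) + scale (\<pi> ^ k) (scale (\<pi> ^ e') (G (k + e')))"
      unfolding F_def by (simp add: power_add mult.commute)
    then show ?case using Suc nb_pi[where k=k] subspace_add[OF adic_nbhd_subspace] by metis
  qed
  have "X - f k \<in> ?N k" for k
  proof -
    have "X - f k = (X - F (k + e)) + (F (k + e) - F k) + (F k - f k)" by simp
    moreover have "X - F (k + e) \<in> ?N k" using X incl by blast
    ultimately show ?thesis
      using c2 nb_L[OF c1] subspace_add[OF adic_nbhd_subspace] by metis
  qed
  then show ?thesis by blast
qed

end



lemma zs_gen: "g \<in> G \<Longrightarrow> g \<in> zspan G"
  using zspan.add[OF zspan.zero, of g G] by simp

lemma zs_add: assumes "x \<in> zspan G" "y \<in> zspan G" shows "(\<lambda>q. x q + y q) \<in> zspan G"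
  using assms(2)
proof (induction y rule: zspan.induct)
  case zero then show ?case using assms(1) by simp
next
  case (add y g)
  show ?case using zspan.add[OF add.IH add.hyps(2)] by (simp add: add.assoc)
next
  case (sub y g)
  show ?case using zspan.sub[OF sub.IH sub.hyps(2)] by (simp add: add_diff_eq)
qed

lemma zs_neg: "x \<in> zspan G \<Longrightarrow> (\<lambda>q. - x q) \<in> zspan G"
proof (induction x rule: zspan.induct)
  case zero then show ?case using zspan.zero by simp
next
  case (add y g)
  have "(\<lambda>q. - (y q + g q)) = (\<lambda>q. - y q - g q)"
    by (rule ext) (simp only: minus_add_distrib diff_conv_add_uminus)
  then show ?case using zspan.sub[OF add.IH add.hyps(2)] by simp
next
  case (sub y g)
  have "(\<lambda>q. - (y q - g q)) = (\<lambda>q. - y q + g q)"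
    by (rule ext) (simp only: minus_diff_eq diff_conv_add_uminus add.commute)
  then show ?case using zspan.add[OF sub.IH sub.hyps(2)] by simp
qed

lemma zs_diff: assumes "x \<in> zspan G" "y \<in> zspan G" shows "(\<lambda>q. x q - y q) \<in> zspan G"
proof -
  have "(\<lambda>q. x q + (\<lambda>q. - y q) q) \<in> zspan G" by (rule zs_add[OF assms(1) zs_neg[OF assms(2)]])
  moreover have "(\<lambda>q. x q + (\<lambda>q. - y q) q) = (\<lambda>q. x q - y q)"
    by (rule ext) (simp only: diff_conv_add_uminus)
  ultimately show ?thesis by simp
qed

lemma zs_sum: "(\<And>i. i \<in> A \<Longrightarrow> f i \<in> zspan G) \<Longrightarrow> (\<lambda>q. \<Sum>i\<in>A. f i q) \<in> zspan G"
proof (induction A rule: infinite_finite_induct)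
  case (infinite A) then show ?case using zspan.zero by simp
next
  case empty then show ?case using zspan.zero by simp
next
  case (insert x F)
  then have "(\<lambda>q. f x q + (\<Sum>i\<in>F. f i q)) \<in> zspan G"
    by (intro zs_add[where x="f x" and y="\<lambda>q. \<Sum>i\<in>F. f i q", simplified]) auto
  then show ?case using insert by simp
qed

lemma zs_natmult: assumes x: "x \<in> zspan G" shows "(\<lambda>q. int n * x q) \<in> zspan G"
proof (induction n)
  case 0 then show ?case using zspan.zero by simp
next
  case (Suc n)
  have "(\<lambda>q. int n * x q + x q) \<in> zspan G" by (rule zs_add[OF Suc.IH x])
  moreover have "(\<lambda>q. int n * x q + x q) = (\<lambda>q. int (Suc n) * x q)"
    by (rule ext) (simp add: algebra_simps)
  ultimately show ?case by simp
qed

lemma zs_intmult: assumes x: "x \<in> zspan G" shows "(\<lambda>q. c * x q) \<in> zspan G"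
proof (cases c rule: int_cases)
  case (nonneg n) then show ?thesis using zs_natmult[OF x] by simp
next
  case (neg n)
  have "(\<lambda>q. - (int (Suc n) * x q)) \<in> zspan G" by (rule zs_neg[OF zs_natmult[OF x]])
  moreover have "(\<lambda>q. - (int (Suc n) * x q)) = (\<lambda>q. c * x q)"
    by (rule ext) (simp add: neg algebra_simps)
  ultimately show ?thesis by simp
qed



section \<open>Tensor relations\<close>

context module
begin

lemma R1: "a \<in> L \<Longrightarrow> a' \<in> L \<Longrightarrow> (\<lambda>q. delta (a + a', m) q - delta (a, m) q - delta (a', m) q) \<in> zspan (tensor_rels scale L)"
  unfolding tensor_rels_def
  by (rule zs_gen, rule UnI1, rule UnI1, rule CollectI, intro exI conjI, rule refl, assumption+)

lemma R2: "a \<in> L \<Longrightarrow> (\<lambda>q. delta (a, m + m') q - delta (a, m) q - delta (a, m') q) \<in> zspan (tensor_rels scale L)"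
  unfolding tensor_rels_def
  by (rule zs_gen, rule UnI1, rule UnI2, rule CollectI, intro exI conjI, rule refl, assumption+)

lemma R3: "a \<in> L \<Longrightarrow> (\<lambda>q. delta (t * a, m) q - delta (a, scale t m) q) \<in> zspan (tensor_rels scale L)"
  unfolding tensor_rels_def
  by (rule zs_gen, rule UnI2, rule CollectI, intro exI conjI, rule refl, assumption+)

lemma delta_zero2: assumes "a \<in> L" shows "delta (a, 0) \<in> zspan (tensor_rels scale L)"
proof -
  have "(\<lambda>q. - (\<lambda>q. delta (a, 0 + 0) q - delta (a, 0) q - delta (a, 0) q) q) \<in> zspan (tensor_rels scale L)"
    by (rule zs_neg[OF R2[OF assms]])
  then show ?thesis by simp
qed

lemma delta_zero1: assumes "is_ideal L" shows "delta (0, m) \<in> zspan (tensor_rels scale L)"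
proof -
  have "(\<lambda>q. - (\<lambda>q. delta (0 + 0, m) q - delta (0, m) q - delta (0, m) q) q) \<in> zspan (tensor_rels scale L)"
    by (rule zs_neg[OF R1[OF ideal_0[OF assms] ideal_0[OF assms]]])
  then show ?thesis by simp
qed

lemma T1: assumes a: "a \<in> L"
  shows "(\<lambda>q. delta (a, \<Sum>k<(n::nat). y k) q - (\<Sum>k<n. delta (a, y k) q)) \<in> zspan (tensor_rels scale L)"
proof (induction n)
  case 0 then show ?case using delta_zero2[OF a] by simp
next
  case (Suc n)
  have "(\<lambda>q. (\<lambda>q. delta (a, (\<Sum>k<n. y k) + y n) q - delta (a, \<Sum>k<n. y k) q - delta (a, y n) q) q +
          (\<lambda>q. delta (a, \<Sum>k<n. y k) q - (\<Sum>k<n. delta (a, y k) q)) q) \<in> zspan (tensor_rels scale L)"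
    by (rule zs_add[OF R2[OF a] Suc.IH])
  moreover have "(\<lambda>q. (\<lambda>q. delta (a, (\<Sum>k<n. y k) + y n) q - delta (a, \<Sum>k<n. y k) q - delta (a, y n) q) q +
          (\<lambda>q. delta (a, \<Sum>k<n. y k) q - (\<Sum>k<n. delta (a, y k) q)) q) =
      (\<lambda>q. delta (a, \<Sum>k<Suc n. y k) q - (\<Sum>k<Suc n. delta (a, y k) q))"
    by (rule ext) simp
  ultimately show ?case by simp
qed

lemma T1nat: assumes a: "a \<in> L"
  shows "(\<lambda>q. delta (a, scale (of_nat n) y) q - int n * delta (a, y) q) \<in> zspan (tensor_rels scale L)"
proof (induction n)
  case 0 then show ?case using delta_zero2[OF a] by simp
next
  case (Suc n)
  have "(\<lambda>q. (\<lambda>q. delta (a, scale (of_nat n) y + y) q - delta (a, scale (of_nat n) y) q - delta (a, y) q) q +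
          (\<lambda>q. delta (a, scale (of_nat n) y) q - int n * delta (a, y) q) q) \<in> zspan (tensor_rels scale L)"
    by (rule zs_add[OF R2[OF a] Suc.IH])
  moreover have "scale (of_nat (Suc n)) y = scale (of_nat n) y + y"
    by (simp add: scale_left_distrib)
  moreover have "(\<lambda>q. (\<lambda>q. delta (a, scale (of_nat n) y + y) q - delta (a, scale (of_nat n) y) q - delta (a, y) q) q +
          (\<lambda>q. delta (a, scale (of_nat n) y) q - int n * delta (a, y) q) q) =
      (\<lambda>q. delta (a, scale (of_nat n) y + y) q - int (Suc n) * delta (a, y) q)"
    by (rule ext) (simp add: algebra_simps)
  ultimately show ?case by simp
qed

lemma T2: assumes a: "a \<in> L"
  shows "(\<lambda>q. delta (a, scale (of_int c) y) q - c * delta (a, y) q) \<in> zspan (tensor_rels scale L)"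
proof (cases c rule: int_cases)
  case (nonneg n)
  show ?thesis using T1nat[OF a, of n y] nonneg by simp
next
  case (neg n)
  define s where "s = scale (of_nat (Suc n)) y"
  have h1: "(\<lambda>q. delta (a, s + - s) q - delta (a, s) q - delta (a, - s) q) \<in> zspan (tensor_rels scale L)"
    by (rule R2[OF a])
  have h2: "(\<lambda>q. delta (a, s) q - int (Suc n) * delta (a, y) q) \<in> zspan (tensor_rels scale L)"
    unfolding s_def by (rule T1nat[OF a])
  have h3: "(\<lambda>q. (\<lambda>q. delta (a, 0) q - (\<lambda>q. delta (a, s + - s) q - delta (a, s) q - delta (a, - s) q) q) q
          - (\<lambda>q. delta (a, s) q - int (Suc n) * delta (a, y) q) q) \<in> zspan (tensor_rels scale L)"
    by (rule zs_diff[OF zs_diff[OF delta_zero2[OF a] h1] h2])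
  have "(of_int c :: 'a) = - of_nat (Suc n)" using neg by simp
  then have "scale (of_int c) y = - s" unfolding s_def by (simp only: scale_minus_left)
  moreover have "(\<lambda>q. (\<lambda>q. delta (a, 0) q - (\<lambda>q. delta (a, s + - s) q - delta (a, s) q - delta (a, - s) q) q) q
          - (\<lambda>q. delta (a, s) q - int (Suc n) * delta (a, y) q) q) =
        (\<lambda>q. delta (a, - s) q - c * delta (a, y) q)"
    by (rule ext) (simp add: neg algebra_simps)
  ultimately show ?thesis using h3 by simp
qed

lemma T3: assumes L: "is_ideal L" and x: "\<And>i. i < (n::nat) \<Longrightarrow> x i \<in> L"
  shows "(\<lambda>q. delta (\<Sum>i<n. x i, m) q - (\<Sum>i<n. delta (x i, m) q)) \<in> zspan (tensor_rels scale L)"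
  using x
proof (induction n)
  case 0 then show ?case using delta_zero1[OF L] by simp
next
  case (Suc n)
  have S: "(\<Sum>i<n. x i) \<in> L" using Suc.prems by (intro ideal_sum[OF L]) auto
  have IH: "(\<lambda>q. delta (\<Sum>i<n. x i, m) q - (\<Sum>i<n. delta (x i, m) q)) \<in> zspan (tensor_rels scale L)"
    using Suc by simp
  have "(\<lambda>q. (\<lambda>q. delta ((\<Sum>i<n. x i) + x n, m) q - delta (\<Sum>i<n. x i, m) q - delta (x n, m) q) q +
          (\<lambda>q. delta (\<Sum>i<n. x i, m) q - (\<Sum>i<n. delta (x i, m) q)) q) \<in> zspan (tensor_rels scale L)"
    by (rule zs_add[OF R1[OF S Suc.prems[of n]] IH]) simp
  moreover have "(\<lambda>q. (\<lambda>q. delta ((\<Sum>i<n. x i) + x n, m) q - delta (\<Sum>i<n. x i, m) q - delta (x n, m) q) q +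
          (\<lambda>q. delta (\<Sum>i<n. x i, m) q - (\<Sum>i<n. delta (x i, m) q)) q) =
      (\<lambda>q. delta (\<Sum>i<Suc n. x i, m) q - (\<Sum>i<Suc n. delta (x i, m) q))"
    by (rule ext) simp
  ultimately show ?case by simp
qed

end



context core
begin

lemma tensor_inj: "tensor_mult_injective scale L"
  unfolding tensor_mult_injective_def
proof (intro allI impI)
  fix n :: nat and c :: "nat \<Rightarrow> int" and xs :: "nat \<Rightarrow> 'r" and ms :: "nat \<Rightarrow> 'm"
  assume xs: "\<forall>i<n. xs i \<in> L" and rel: "(\<Sum>i<n. scale (of_int (c i) * xs i) (ms i)) = 0"
  define y where "y t i = scale (of_int (c t) * \<phi> i (xs t)) (ms t)" for t i
  define \<nu> where "\<nu> i = (\<Sum>t<n. y t i)" for i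
  let ?Z = "zspan (tensor_rels scale L)"
  have phisum: "(\<Sum>i<r. \<phi> i (xs t) * \<phi> j (a i)) = \<phi> j (xs t)" if "t < n" "j < r" for t j
  proof -
    have "(\<Sum>i<r. \<phi> i (xs t) * \<phi> j (a i)) = \<phi> j (\<Sum>i<r. \<phi> i (xs t) * a i)"
      using lin_sum[OF that(2), of r a "\<lambda>i. \<phi> i (xs t)"] a_in by simp
    also have "(\<Sum>i<r. \<phi> i (xs t) * a i) = xs t"
      using decomp[of "xs t"] xs that(1) by (simp add: mult.commute)
    finally show ?thesis .
  qed
  have nu1: "\<forall>j<r. \<nu> j = (\<Sum>i<r. scale (\<phi> j (a i)) (\<nu> i))"
  proof (intro allI impI)
    fix j assume j: "j < r"
    have "(\<Sum>i<r. scale (\<phi> j (a i)) (\<nu> i)) = (\<Sum>i<r. \<Sum>t<n. scale (\<phi> j (a i) * (of_int (c t) * \<phi> i (xs t))) (ms t))"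
      by (simp add: \<nu>_def y_def scale_sum_right)
    also have "\<dots> = (\<Sum>t<n. \<Sum>i<r. scale (\<phi> j (a i) * (of_int (c t) * \<phi> i (xs t))) (ms t))"
      by (rule sum.swap)
    also have "\<dots> = (\<Sum>t<n. scale (of_int (c t) * (\<Sum>i<r. \<phi> i (xs t) * \<phi> j (a i))) (ms t))"
      by (simp add: scale_sum_left sum_distrib_left algebra_simps)
    also have "\<dots> = (\<Sum>t<n. y t j)"
      using phisum j by (simp add: y_def)
    finally show "\<nu> j = (\<Sum>i<r. scale (\<phi> j (a i)) (\<nu> i))" by (simp add: \<nu>_def)
  qed
  have nu2: "(\<Sum>i<r. scale (a i) (\<nu> i)) = 0"
  proof -
    have "(\<Sum>i<r. scale (a i) (\<nu> i)) = (\<Sum>i<r. \<Sum>t<n. scale (a i * (of_int (c t) * \<phi> i (xs t))) (ms t))"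
      by (simp add: \<nu>_def y_def scale_sum_right)
    also have "\<dots> = (\<Sum>t<n. \<Sum>i<r. scale (a i * (of_int (c t) * \<phi> i (xs t))) (ms t))"
      by (rule sum.swap)
    also have "\<dots> = (\<Sum>t<n. scale (of_int (c t) * (\<Sum>i<r. a i * \<phi> i (xs t))) (ms t))"
      by (simp add: scale_sum_left sum_distrib_left algebra_simps)
    also have "\<dots> = (\<Sum>t<n. scale (of_int (c t) * xs t) (ms t))"
      using decomp xs by (intro sum.cong refl) (metis lessThan_iff)
    finally show ?thesis using rel by simp
  qed
  have nu0: "\<nu> j = 0" if "j < r" for j
    by (rule inj[OF nu1 nu2 that])
  have A: "(\<lambda>q. delta (xs t, ms t) q - (\<Sum>i<r. delta (a i, scale (\<phi> i (xs t)) (ms t)) q)) \<in> ?Z"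
    if t: "t < n" for t
  proof -
    have h1: "(\<lambda>q. delta (\<Sum>i<r. a i * \<phi> i (xs t), ms t) q - (\<Sum>i<r. delta (a i * \<phi> i (xs t), ms t) q)) \<in> ?Z"
      using a_in by (intro T3 L ideal_mult_right[OF L]) auto
    have h2: "(\<lambda>q. \<Sum>i<r. (\<lambda>i q. delta (\<phi> i (xs t) * a i, ms t) q - delta (a i, scale (\<phi> i (xs t)) (ms t)) q) i q) \<in> ?Z"
      using a_in by (intro zs_sum R3) auto
    have "(\<lambda>q. (\<lambda>q. delta (\<Sum>i<r. a i * \<phi> i (xs t), ms t) q - (\<Sum>i<r. delta (a i * \<phi> i (xs t), ms t) q)) q +
        (\<lambda>q. \<Sum>i<r. (\<lambda>i q. delta (\<phi> i (xs t) * a i, ms t) q - delta (a i, scale (\<phi> i (xs t)) (ms t)) q) i q) q) \<in> ?Z"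
      by (rule zs_add[OF h1 h2])
    moreover have "(\<lambda>q. (\<lambda>q. delta (\<Sum>i<r. a i * \<phi> i (xs t), ms t) q - (\<Sum>i<r. delta (a i * \<phi> i (xs t), ms t) q)) q +
        (\<lambda>q. \<Sum>i<r. (\<lambda>i q. delta (\<phi> i (xs t) * a i, ms t) q - delta (a i, scale (\<phi> i (xs t)) (ms t)) q) i q) q) =
        (\<lambda>q. delta (xs t, ms t) q - (\<Sum>i<r. delta (a i, scale (\<phi> i (xs t)) (ms t)) q))"
      using decomp[of "xs t"] xs t by (auto simp: fun_eq_iff sum_subtractf mult.commute)
    ultimately show ?thesis by simp
  qed
  have B: "(\<lambda>q. c t * delta (xs t, ms t) q - (\<Sum>i<r. delta (a i, y t i) q)) \<in> ?Z" if t: "t < n" for t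
  proof -
    have h1: "(\<lambda>q. c t * (\<lambda>q. delta (xs t, ms t) q - (\<Sum>i<r. delta (a i, scale (\<phi> i (xs t)) (ms t)) q)) q) \<in> ?Z"
      by (rule zs_intmult[OF A[OF t]])
    have h2: "(\<lambda>q. \<Sum>i<r. (\<lambda>i q. - (delta (a i, scale (of_int (c t)) (scale (\<phi> i (xs t)) (ms t))) q
          - c t * delta (a i, scale (\<phi> i (xs t)) (ms t)) q)) i q) \<in> ?Z"
      using a_in by (intro zs_sum zs_neg T2) auto
    have "(\<lambda>q. (\<lambda>q. c t * (\<lambda>q. delta (xs t, ms t) q - (\<Sum>i<r. delta (a i, scale (\<phi> i (xs t)) (ms t)) q)) q) q +
        (\<lambda>q. \<Sum>i<r. (\<lambda>i q. - (delta (a i, scale (of_int (c t)) (scale (\<phi> i (xs t)) (ms t))) q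
          - c t * delta (a i, scale (\<phi> i (xs t)) (ms t)) q)) i q) q) \<in> ?Z"
      by (rule zs_add[OF h1 h2])
    moreover have "(\<lambda>q. (\<lambda>q. c t * (\<lambda>q. delta (xs t, ms t) q - (\<Sum>i<r. delta (a i, scale (\<phi> i (xs t)) (ms t)) q)) q) q +
        (\<lambda>q. \<Sum>i<r. (\<lambda>i q. - (delta (a i, scale (of_int (c t)) (scale (\<phi> i (xs t)) (ms t))) q
          - c t * delta (a i, scale (\<phi> i (xs t)) (ms t)) q)) i q) q) =
        (\<lambda>q. c t * delta (xs t, ms t) q - (\<Sum>i<r. delta (a i, y t i) q))"
      by (simp add: fun_eq_iff y_def sum_subtractf right_diff_distrib sum_distrib_left)
    ultimately show ?thesis by simp
  qed
  have C: "(\<lambda>q. - (\<lambda>q. delta (a i, \<Sum>t<n. y t i) q - (\<Sum>t<n. delta (a i, y t i) q)) q) \<in> ?Z" if "i < r" for i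
    using a_in that by (intro zs_neg T1) auto
  have D: "delta (a i, \<nu> i) \<in> ?Z" if "i < r" for i
    using nu0[OF that] delta_zero2 a_in that by simp
  have "(\<lambda>q. (\<Sum>t<n. (\<lambda>q. c t * delta (xs t, ms t) q - (\<Sum>i<r. delta (a i, y t i) q)) q) +
      ((\<Sum>i<r. (\<lambda>q. - (\<lambda>q. delta (a i, \<Sum>t<n. y t i) q - (\<Sum>t<n. delta (a i, y t i) q)) q) q) +
       (\<Sum>i<r. delta (a i, \<nu> i) q))) \<in> ?Z"
    using B C D by (intro zs_add zs_sum) auto
  moreover have "(\<lambda>q. (\<Sum>t<n. (\<lambda>q. c t * delta (xs t, ms t) q - (\<Sum>i<r. delta (a i, y t i) q)) q) +
      ((\<Sum>i<r. (\<lambda>q. - (\<lambda>q. delta (a i, \<Sum>t<n. y t i) q - (\<Sum>t<n. delta (a i, y t i) q)) q) q) +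
       (\<Sum>i<r. delta (a i, \<nu> i) q))) = (\<lambda>q. \<Sum>i<n. c i * delta (xs i, ms i) q)"
  proof
    fix q
    have "(\<Sum>t<n. \<Sum>i<r. delta (a i, y t i) q) = (\<Sum>i<r. \<Sum>t<n. delta (a i, y t i) q)"
      by (rule sum.swap)
    then show "(\<Sum>t<n. (\<lambda>q. c t * delta (xs t, ms t) q - (\<Sum>i<r. delta (a i, y t i) q)) q) +
      ((\<Sum>i<r. (\<lambda>q. - (\<lambda>q. delta (a i, \<Sum>t<n. y t i) q - (\<Sum>t<n. delta (a i, y t i) q)) q) q) +
       (\<Sum>i<r. delta (a i, \<nu> i) q)) = (\<Sum>i<n. c i * delta (xs i, ms i) q)"
      by (simp add: sum_subtractf \<nu>_def)
  qed
  ultimately show "(\<lambda>q. \<Sum>i<n. c i * delta (xs i, ms i) q) \<in> ?Z" by simp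
qed

end



lemma ideal_pow_mono_base: "A \<subseteq> B \<Longrightarrow> ideal_pow A k \<subseteq> ideal_pow B k"
  by (induction k) (auto intro: subsetD[OF ideal_prod_mono])

lemma incl_nbhd:
  assumes M: "module scale" and I: "is_ideal I" and n: "n \<ge> 1"
  shows "submod scale (ideal_pow (KK \<pi> I) (k + (n - 1))) \<subseteq> adic_nbhd scale (submod scale (ideal_pow I n)) (principal_ideal \<pi>) k"
proof -
  interpret module scale by (rule M)
  have sub: "ideal_pow (KK \<pi> I) (k + (n - 1)) \<subseteq> ideal_sum (principal_ideal (\<pi> ^ k)) (ideal_pow I n)"
    using KK_pow_pq[OF I, of k n "k + (n - 1)"] n by simp
  show ?thesis
  proof (rule submod_least[OF adic_nbhd_subspace])
    fix b m assume "b \<in> ideal_pow (KK \<pi> I) (k + (n - 1))"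
    then obtain u v where uv: "b = u + v" "u \<in> principal_ideal (\<pi> ^ k)" "v \<in> ideal_pow I n"
      using sub by (meson ideal_sumE subsetD)
    have "scale u m \<in> submod scale (ideal_pow (principal_ideal \<pi>) k)"
      using uv(2) by (simp add: principal_pow submod_mem)
    moreover have "scale v m \<in> submod scale (ideal_pow I n)" using uv(3) by (rule submod_mem)
    ultimately show "scale b m \<in> adic_nbhd scale (submod scale (ideal_pow I n)) (principal_ideal \<pi>) k"
      unfolding adic_nbhd_def uv(1) scale_left_distrib by blast
  qed
qed


lemma core_inst:
  assumes M: "module scale" and I: "is_ideal I"
    and J: "is_ideal J" and d: "nonzerodivisor d" and IJ: "ideal_prod I J = principal_ideal d"
    and tors: "\<forall>r k. \<pi> ^ k * r \<in> I \<longrightarrow> \<pi> ^ N * r \<in> I"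
    and cs: "adic_complete_sep scale {0} (KK \<pi> I)"
    and fl: "\<forall>n\<ge>1. quot_flat scale (ideal_pow (KK \<pi> I) n)"
  shows "\<exists>r a \<phi>. core scale (KK \<pi> I) (ideal_pow I n) r a \<phi> (n * (N + 1) + 1)"
proof -
  let ?K = "KK \<pi> I"
  have inv1: "is_ideal (ideal_pow J n)" and inv2: "nonzerodivisor (d ^ n)" and
    inv3: "ideal_prod (ideal_pow I n) (ideal_pow J n) = principal_ideal (d ^ n)"
    using invertible_pow[OF J d IJ] by auto
  obtain r :: nat and a \<phi> where db: "\<forall>i<r. a i \<in> ideal_pow I n"
    "\<forall>x\<in>ideal_pow I n. x = (\<Sum>i<r. a i * \<phi> i x)"
    "\<forall>i x y. i < r \<longrightarrow> x \<in> ideal_pow I n \<longrightarrow> y \<in> ideal_pow I n \<longrightarrow> \<phi> i (x + y) = \<phi> i x + \<phi> i y"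
    "\<forall>i c x. i < r \<longrightarrow> x \<in> ideal_pow I n \<longrightarrow> \<phi> i (c * x) = c * \<phi> i x"
    "\<forall>i A x. i < r \<longrightarrow> is_ideal A \<longrightarrow> x \<in> ideal_prod (ideal_pow I n) A \<longrightarrow> \<phi> i x \<in> A"
    by (rule dual_basis[OF ideal_pow_ideal[OF I] inv1 inv2 inv3])
  interpret module scale by (rule M)
  have AR: "\<phi> i x \<in> ideal_pow ?K m"
    if "i < r" "x \<in> ideal_pow I n" "x \<in> ideal_pow ?K (m + (n * (N + 1) + 1))" for i m x
  proof -
    have "x \<in> ideal_pow ?K (m + n * (N + 1))"
      using that(3) ideal_pow_antimono[OF KK_ideal[OF I], of "m + n * (N + 1)" "m + (n * (N + 1) + 1)"] by auto
    then have "x \<in> ideal_prod (ideal_pow I n) (ideal_pow ?K m)"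
      using AR_pow[OF I J d IJ tors] that(2) by blast
    then show ?thesis using db(5) that(1) ideal_pow_ideal[OF KK_ideal[OF I]] by blast
  qed
  have "core scale ?K (ideal_pow I n) r a \<phi> (n * (N + 1) + 1)"
    unfolding core_def core_axioms_def
  proof (intro conjI allI impI)
    show "module scale" by (rule M)
    show "is_ideal ?K" by (rule KK_ideal[OF I])
    show "is_ideal (ideal_pow I n)" by (rule ideal_pow_ideal[OF I])
    show "\<And>x. \<forall>k. x \<in> submod scale (ideal_pow ?K k) \<Longrightarrow> x = 0"
      using cs unfolding adic_complete_sep_def adic_nbhd_0 by blast
    show "\<And>f. \<forall>k. f (Suc k) - f k \<in> submod scale (ideal_pow ?K k) \<Longrightarrow>
        \<exists>x. \<forall>k. x - f k \<in> submod scale (ideal_pow ?K k)"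
      using cs unfolding adic_complete_sep_def adic_nbhd_0 by blast
    show "\<And>n. 1 \<le> n \<Longrightarrow> quot_flat scale (ideal_pow ?K n)" using fl by blast
  qed (use db AR in auto)
  then show ?thesis by blast
qed

theorem proposition4p4:
  fixes N :: nat and I :: "'r::comm_ring_1 set" and \<pi> :: 'r
    and scale :: "'r \<Rightarrow> 'm::ab_group_add \<Rightarrow> 'm"
  assumes "module scale"
    and "is_ideal I" and "invertible_ideal I"
    and "\<forall>r k. \<pi> ^ k * r \<in> I \<longrightarrow> \<pi> ^ N * r \<in> I"
    and "adic_complete_sep scale {0} (ideal_sum (principal_ideal \<pi>) I)"
    and "\<forall>n\<ge>1. quot_flat scale (ideal_pow (ideal_sum (principal_ideal \<pi>) I) n)"
  shows "(\<forall>x k. scale (\<pi> ^ k) x \<in> submod scale I \<longrightarrow> scale (\<pi> ^ N) x \<in> submod scale I)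
    \<and> (\<forall>n\<ge>1. adic_complete_sep scale (submod scale (ideal_pow I n)) (principal_ideal \<pi>))
    \<and> (\<forall>n\<ge>1. tensor_mult_injective scale (ideal_pow I n))"
proof -
  note M = assms(1) and I = assms(2) and tors = assms(4)
  interpret module scale by (rule M)
  let ?K = "KK \<pi> I"
  have Keq: "ideal_sum (principal_ideal \<pi>) I = ?K" by (simp add: KK_def[OF I])
  have cs: "adic_complete_sep scale {0} ?K" using assms(5) Keq by simp
  have fl: "\<forall>n\<ge>1. quot_flat scale (ideal_pow ?K n)" using assms(6) Keq by simp
  obtain J d where J: "is_ideal J" and d: "nonzerodivisor d" and IJ: "ideal_prod I J = principal_ideal d"
    using assms(3) unfolding invertible_ideal_def by blast
  have core: "\<exists>r a \<phi>. core scale ?K (ideal_pow I n) r a \<phi> (n * (N + 1) + 1)" for n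
    by (rule core_inst[OF M I J d IJ tors cs fl])
  have compl: "\<And>f. \<forall>k. f (Suc k) - f k \<in> submod scale (ideal_pow ?K k) \<Longrightarrow>
        \<exists>x. \<forall>k. x - f k \<in> submod scale (ideal_pow ?K k)"
    using cs unfolding adic_complete_sep_def adic_nbhd_0 by blast
  have piK: "principal_ideal \<pi> \<subseteq> ?K"
  proof
    fix x assume "x \<in> principal_ideal \<pi>"
    then have "x + 0 \<in> ?K" unfolding KK_def[OF I] using ideal_0[OF I] by (intro ideal_sumI)
    then show "x \<in> ?K" by simp
  qed
  have sepn: "x \<in> submod scale (ideal_pow I n)"
    if "\<forall>k. x \<in> adic_nbhd scale (submod scale (ideal_pow I n)) (principal_ideal \<pi>) k" for n x
  proof -
    obtain r a \<phi> where c: "core scale ?K (ideal_pow I n) r a \<phi> (n * (N + 1) + 1)" using core by blast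
    have "\<forall>k. x \<in> {y + z |y z. y \<in> submod scale (ideal_pow ?K k) \<and> z \<in> submod scale (ideal_pow I n)}"
    proof
      fix k
      from that obtain y z where "x = y + z" "y \<in> submod scale (ideal_pow (principal_ideal \<pi>) k)"
          "z \<in> submod scale (ideal_pow I n)"
        unfolding adic_nbhd_def by blast
      moreover have "submod scale (ideal_pow (principal_ideal \<pi>) k) \<subseteq> submod scale (ideal_pow ?K k)"
        by (intro submod_mono ideal_pow_mono_base piK)
      ultimately show "x \<in> {y + z |y z. y \<in> submod scale (ideal_pow ?K k) \<and> z \<in> submod scale (ideal_pow I n)}"
        by blast
    qed
    then show ?thesis by (rule core.sepL[OF c])
  qed
  have P2: "adic_complete_sep scale (submod scale (ideal_pow I n)) (principal_ideal \<pi>)" if n: "n \<ge> 1" for n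
    unfolding adic_complete_sep_def
  proof (intro conjI allI impI)
    fix x assume "\<forall>k. x \<in> adic_nbhd scale (submod scale (ideal_pow I n)) (principal_ideal \<pi>) k"
    then show "x \<in> submod scale (ideal_pow I n)" by (rule sepn)
  next
    fix f :: "nat \<Rightarrow> 'm"
    assume f: "\<forall>k. f (Suc k) - f k \<in> adic_nbhd scale (submod scale (ideal_pow I n)) (principal_ideal \<pi>) k"
    show "\<exists>x. \<forall>k. x - f k \<in> adic_nbhd scale (submod scale (ideal_pow I n)) (principal_ideal \<pi>) k"
      by (rule complL[OF compl pi_pow_KK[OF I] incl_nbhd[OF M I n] f])
  qed
  have P3: "tensor_mult_injective scale (ideal_pow I n)" for n
  proof -
    obtain r a \<phi> where c: "core scale ?K (ideal_pow I n) r a \<phi> (n * (N + 1) + 1)" using core by blast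
    show ?thesis by (rule core.tensor_inj[OF c])
  qed
  have P1: "scale (\<pi> ^ N) x \<in> submod scale I" if hx: "scale (\<pi> ^ k) x \<in> submod scale I" for x k
  proof -
    have I1: "ideal_pow I 1 = I" by (rule ideal_pow_1[OF I])
    have nb: "scale (\<pi> ^ N) x \<in> adic_nbhd scale (submod scale I) (principal_ideal \<pi>) m" for m
    proof -
      define n0 where "n0 = m + k + 1"
      define A where "A = ideal_pow ?K n0"
      from hx obtain s :: nat and cI mI where hs: "scale (\<pi> ^ k) x = (\<Sum>i<s. scale (cI i) (mI i))"
          "\<forall>i<s. cI i \<in> I"
        by (rule submodE)
      define \<alpha> where "\<alpha> i = (if i = 0 then \<pi> ^ k else - cI (i - 1))" for i
      define X where "X i = (if i = 0 then x else mI (i - 1))" for i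
      have "(\<Sum>i<Suc s. scale (\<alpha> i) (X i)) = scale (\<pi> ^ k) x - (\<Sum>i<s. scale (cI i) (mI i))"
        unfolding sum.lessThan_Suc_shift by (simp add: \<alpha>_def X_def sum_negf)
      then have hsum: "(\<Sum>i<Suc s. scale (\<alpha> i) (X i)) \<in> submod scale A" using hs(1) by (simp add: submod_0)
      have qf: "quot_flat scale A" unfolding A_def using fl n0_def by (simp del: ideal_pow.simps)
      obtain l :: nat and \<beta> Y where
        h1: "\<forall>i<Suc s. X i - (\<Sum>j<l. scale (\<beta> i j) (Y j)) \<in> submod scale A" and
        h2: "\<forall>j<l. (\<Sum>i<Suc s. \<alpha> i * \<beta> i j) \<in> A"
        using qf[unfolded quot_flat_def, rule_format, where k="Suc s" and a=\<alpha> and x=X, OF hsum] by blast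
      have AK: "A \<subseteq> ideal_sum (principal_ideal (\<pi> ^ n0)) I"
        using KK_pow_pq[OF I, of n0 1 n0] I1 unfolding A_def by simp
      have key: "\<exists>\<iota> \<rho>. \<pi> ^ N * \<beta> 0 j = \<iota> + \<pi> ^ m * (\<pi> ^ (N + 1) * \<rho>) \<and> \<iota> \<in> I" if j: "j < l" for j
      proof -
        have "(\<Sum>i<Suc s. \<alpha> i * \<beta> i j) = \<pi> ^ k * \<beta> 0 j - (\<Sum>i<s. cI i * \<beta> (Suc i) j)"
          unfolding sum.lessThan_Suc_shift by (simp add: \<alpha>_def sum_negf)
        moreover have "(\<Sum>i<Suc s. \<alpha> i * \<beta> i j) \<in> ideal_sum (principal_ideal (\<pi> ^ n0)) I"
          using h2 j AK by blast
        ultimately have "\<pi> ^ k * \<beta> 0 j - (\<Sum>i<s. cI i * \<beta> (Suc i) j) \<in> ideal_sum (principal_ideal (\<pi> ^ n0)) I"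
          by simp
        then obtain u v where uv: "\<pi> ^ k * \<beta> 0 j - (\<Sum>i<s. cI i * \<beta> (Suc i) j) = u + v"
            "u \<in> principal_ideal (\<pi> ^ n0)" "v \<in> I"
          by (rule ideal_sumE)
        from uv(2) obtain \<rho> where \<rho>: "u = \<pi> ^ n0 * \<rho>" by (rule principal_memE)
        have cs_in: "(\<Sum>i<s. cI i * \<beta> (Suc i) j) \<in> I"
          using hs(2) by (intro ideal_sum[OF I] ideal_mult_right[OF I]) auto
        have "\<pi> ^ k * (\<beta> 0 j - \<pi> ^ (m + 1) * \<rho>) = v + (\<Sum>i<s. cI i * \<beta> (Suc i) j)"
          using uv(1) \<rho> unfolding n0_def by (simp add: algebra_simps power_add)
        then have "\<pi> ^ k * (\<beta> 0 j - \<pi> ^ (m + 1) * \<rho>) \<in> I" using uv(3) cs_in by (simp add: ideal_add[OF I])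
        then have "\<pi> ^ N * (\<beta> 0 j - \<pi> ^ (m + 1) * \<rho>) \<in> I" using tors by blast
        moreover have "\<pi> ^ N * \<beta> 0 j = \<pi> ^ N * (\<beta> 0 j - \<pi> ^ (m + 1) * \<rho>) + \<pi> ^ m * (\<pi> ^ (N + 1) * \<rho>)"
          by (simp add: algebra_simps power_add)
        ultimately show ?thesis by blast
      qed
      let ?NB = "adic_nbhd scale (submod scale I) (principal_ideal \<pi>) m"
      have sNB: "subspace ?NB" by (rule adic_nbhd_subspace)
      have inclm: "submod scale (ideal_pow ?K m) \<subseteq> ?NB"
        using incl_nbhd[OF M I, where n=1 and k=m and \<pi>=\<pi>] I1 by simp
      have "submod scale A \<subseteq> submod scale (ideal_pow ?K m)"
        unfolding A_def n0_def by (intro submod_mono ideal_pow_antimono KK_ideal I) simp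
      moreover have "x - (\<Sum>j<l. scale (\<beta> 0 j) (Y j)) \<in> submod scale A"
        using h1[rule_format, of 0] by (simp add: X_def)
      ultimately have e1: "scale (\<pi> ^ N) (x - (\<Sum>j<l. scale (\<beta> 0 j) (Y j))) \<in> ?NB"
        using inclm submod_scale by blast
      have e2: "(\<Sum>j<l. scale (\<pi> ^ N * \<beta> 0 j) (Y j)) \<in> ?NB"
      proof (rule subspace_sum[OF sNB])
        fix j assume "j \<in> {..<l}"
        then obtain \<iota> \<rho> where ir: "\<pi> ^ N * \<beta> 0 j = \<iota> + \<pi> ^ m * (\<pi> ^ (N + 1) * \<rho>)" "\<iota> \<in> I"
          using key by blast
        have "scale (\<pi> ^ N * \<beta> 0 j) (Y j) = scale \<iota> (Y j) + scale (\<pi> ^ m) (scale (\<pi> ^ (N + 1) * \<rho>) (Y j))"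
          by (simp add: ir scale_left_distrib)
        moreover have "scale \<iota> (Y j) \<in> ?NB" using ir(2) by (intro nb_L submod_mem)
        moreover have "scale (\<pi> ^ m) (scale (\<pi> ^ (N + 1) * \<rho>) (Y j)) \<in> ?NB" by (rule nb_pi)
        ultimately show "scale (\<pi> ^ N * \<beta> 0 j) (Y j) \<in> ?NB" using subspace_add[OF sNB] by simp
      qed
      have "scale (\<pi> ^ N) x = scale (\<pi> ^ N) (x - (\<Sum>j<l. scale (\<beta> 0 j) (Y j))) + (\<Sum>j<l. scale (\<pi> ^ N * \<beta> 0 j) (Y j))"
        by (simp add: scale_right_diff_distrib scale_sum_right)
      then show ?thesis using e1 e2 subspace_add[OF sNB] by metis
    qed
    have "scale (\<pi> ^ N) x \<in> submod scale (ideal_pow I 1)"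
      by (rule sepn) (use nb I1 in simp)
    then show ?thesis using I1 by simp
  qed
  show ?thesis using P1 P2 P3 by blast
qed


end
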